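(* Fix $\mathsf{R}\ge 0$ and $0<\sigma_1^2<\sigma_2^2$, and assume Assumption (A) stated in the context. Then \[ \lim_{n \to \infty} C_s(\sigma_1^2, \sigma_2^2, \mathsf{R}, n) = \mathsf{R}^2 \left( \frac{1}{2\sigma_1^2}- \frac{1}{2\sigma_2^2} \right). \]
   Context: Vector Gaussian wiretap channel in dimension $n$: $\mathbf{Y}_1=\mathbf{X}+\mathbf{N}_1$, $\mathbf{Y}_2=\mathbf{X}+\mathbf{N}_2$, with $\mathbf{X}\in\mathbb{R}^n$, $\mathbf{N}_1\sim\mathcal{N}(\mathbf{0}_n,\sigma_1^2\mathbf{I}_n)$, $\mathbf{N}_2\sim\mathcal{N}(\mathbf{0}_n,\sigma_2^2\mathbf{I}_n)$, mutually independent with $\mathbf{X}$. $C_s(\sigma_1^2,\sigma_2^2,\mathsf{R},n)=\max I(\mathbf{X};\mathbf{Y}_1)-I(\mathbf{X};\mathbf{Y}_2)$ over distributions of $\mathbf{X}$ supported in $\{\|\mathbf{x}\|\le\mathsf{R}\}$. $\mathsf{h}_v(x)=\mathsf{I}_v(x)/\mathsf{I}_{v-1}(x)$ with $\mathsf{I}_v$ the modified Bessel function of the first kind. Assumption (A): for all $\mathsf{R}\ge0$, $0\le\sigma_1\le\sigma_2$, $n\in\mathbb{N}$, the function $y\mapsto \frac{1}{\sigma_2^2}\mathbb{E}\left[\frac{\mathsf{R}}{\|y\mathbf{e}_1+\mathbf{W}\|}\mathsf{h}_{\frac{n}{2}}\left(\frac{\mathsf{R}}{\sigma_2^2}\|y\mathbf{e}_1+\mathbf{W}\|\right)-1\right]-\frac{1}{\sigma_1^2}\left(\frac{\mathsf{R}}{y}\mathsf{h}_{\frac{n}{2}}\left(\frac{\mathsf{R}}{\sigma_1^2}y\right)-1\right)$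 has at most one sign change on $y>0$, where $\mathbf{W}\sim\mathcal{N}(\mathbf{0}_{n+2},(\sigma_2^2-\sigma_1^2)\mathbf{I}_{n+2})$ and $\mathbf{e}_1$ is the first unit vector of $\mathbb{R}^{n+2}$. *)

theory Defs
  imports "HOL-Probability.Probability"
begin

text \<open>Vectors of R^n are represented as extensional functions on the index set {..<n},
  i.e. elements of the space of the product measure below.\<close>

definition Rn :: "nat \<Rightarrow> (nat \<Rightarrow> real) measure" where
  "Rn n = PiM {..<n} (\<lambda>_. (borel :: real measure))"

definition vnorm :: "nat \<Rightarrow> (nat \<Rightarrow> real) \<Rightarrow> real" where
  "vnorm n x = sqrt (\<Sum>i<n. (x i)\<^sup>2)"

text \<open>Law of N(0, s^2 I_n), s the standard deviation.\<close>
definition gauss_vec :: "nat \<Rightarrow> real \<Rightarrow> (nat \<Rightarrow> real) measure" where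
  "gauss_vec n s = PiM {..<n} (\<lambda>_. density lborel (normal_density 0 s))"

definition chan_MI :: "nat \<Rightarrow> (nat \<Rightarrow> real) measure \<Rightarrow> (nat \<Rightarrow> real) measure \<Rightarrow> real" where
  "chan_MI n mu Nm =
     prob_space.mutual_information (mu \<Otimes>\<^sub>M Nm) (exp 1) (Rn n) (Rn n) fst
       (\<lambda>p. restrict (\<lambda>i. fst p i + snd p i) {..<n})"

definition input_dists :: "nat \<Rightarrow> real \<Rightarrow> (nat \<Rightarrow> real) measure set" where
  "input_dists n R = {mu. prob_space mu \<and> sets mu = sets (Rn n) \<and> (AE x in mu. vnorm n x \<le> R)}"

text \<open>Secrecy capacity C_s(sigma1^2, sigma2^2, R, n); s1, s2 are the standard deviations.\<close>
definition Cs :: "real \<Rightarrow> real \<Rightarrow> real \<Rightarrow> nat \<Rightarrow> real" where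
  "Cs s1 s2 R n = (SUP mu \<in> input_dists n R. chan_MI n mu (gauss_vec n s1) - chan_MI n mu (gauss_vec n s2))"

definition besselI :: "real \<Rightarrow> real \<Rightarrow> real" where
  "besselI v x = (\<Sum>k. (x / 2) powr (2 * real k + v) / (fact k * Gamma (real k + v + 1)))"

definition hB :: "real \<Rightarrow> real \<Rightarrow> real" where
  "hB v x = besselI v x / besselI (v - 1) x"

definition assmA_fun :: "real \<Rightarrow> real \<Rightarrow> real \<Rightarrow> nat \<Rightarrow> real \<Rightarrow> real" where
  "assmA_fun R s1 s2 n y =
     (1 / s2\<^sup>2) * (\<integral>w. (let r = vnorm (n + 2) (\<lambda>i. (if i = 0 then y else 0) + w i) in
                        R / r * hB (real n / 2) (R / s2\<^sup>2 * r) - 1)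
                     \<partial>gauss_vec (n + 2) (sqrt (s2\<^sup>2 - s1\<^sup>2)))
     - (1 / s1\<^sup>2) * (R / y * hB (real n / 2) (R / s1\<^sup>2 * y) - 1)"

definition at_most_one_sign_change :: "(real \<Rightarrow> real) \<Rightarrow> bool" where
  "at_most_one_sign_change f \<longleftrightarrow>
     \<not> (\<exists>a b c. 0 < a \<and> a < b \<and> b < c \<and> f a * f b < 0 \<and> f b * f c < 0)"

definition assumption_A :: bool where
  "assumption_A \<longleftrightarrow> (\<forall>R s1 s2 n. 0 \<le> R \<and> 0 < s1 \<and> s1 < s2 \<and> 1 \<le> n \<longrightarrow>
                        at_most_one_sign_change (assmA_fun R s1 s2 n))"

end

theory Submission
  imports Defs
begin

lemma nshift_nn:
  fixes s c :: real and g :: "real \<Rightarrow> ennreal"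
  assumes s: "0 < s" and g[measurable]: "g \<in> borel_measurable borel"
  shows "(\<integral>\<^sup>+z. g (c + z) \<partial>density lborel (normal_density 0 s)) =
         (\<integral>\<^sup>+y. ennreal (exp (c * y / s\<^sup>2 - c\<^sup>2 / (2 * s\<^sup>2))) * g y \<partial>density lborel (normal_density 0 s))"
proof -
  have e: "normal_density 0 s (y - c) = normal_density 0 s y * exp (c * y / s\<^sup>2 - c\<^sup>2 / (2 * s\<^sup>2))" for y
  proof -
    have eq: "-(y - c - 0)\<^sup>2 / (2 * s\<^sup>2) = -(y - 0)\<^sup>2 / (2 * s\<^sup>2) + (c * y / s\<^sup>2 - c\<^sup>2 / (2 * s\<^sup>2))"
      using s by (simp add: field_simps power2_eq_square)
    show ?thesis unfolding normal_density_def eq exp_add by (simp only: mult.assoc)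
  qed
  have "(\<integral>\<^sup>+z. g (c + z) \<partial>density lborel (normal_density 0 s)) =
        (\<integral>\<^sup>+z. ennreal (normal_density 0 s z) * g (c + z) \<partial>lborel)"
    by (simp add: nn_integral_density)
  also have "\<dots> = (\<integral>\<^sup>+y. ennreal (normal_density 0 s (y - c)) * g y \<partial>lborel)"
    using nn_integral_real_affine[of "\<lambda>y. ennreal (normal_density 0 s (y - c)) * g y" 1 c] by simp
  also have "\<dots> = (\<integral>\<^sup>+y. ennreal (normal_density 0 s y) * (ennreal (exp (c * y / s\<^sup>2 - c\<^sup>2 / (2 * s\<^sup>2))) * g y) \<partial>lborel)"
    by (intro nn_integral_cong) (simp add: e ennreal_mult mult.assoc)
  also have "\<dots> = (\<integral>\<^sup>+y. ennreal (exp (c * y / s\<^sup>2 - c\<^sup>2 / (2 * s\<^sup>2))) * g y \<partial>density lborel (normal_density 0 s))"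
    by (simp add: nn_integral_density)
  finally show ?thesis .
qed


definition NN :: "real \<Rightarrow> real measure" where
  "NN s = density lborel (normal_density 0 s)"

definition vadd :: "nat \<Rightarrow> (nat \<Rightarrow> real) \<Rightarrow> (nat \<Rightarrow> real) \<Rightarrow> nat \<Rightarrow> real" where
  "vadd n x z = restrict (\<lambda>i. x i + z i) {..<n}"

definition ef :: "real \<Rightarrow> real \<Rightarrow> real \<Rightarrow> real" where
  "ef s c y = exp (c * y / s\<^sup>2 - c\<^sup>2 / (2 * s\<^sup>2))"

definition fd :: "nat \<Rightarrow> real \<Rightarrow> (nat \<Rightarrow> real) \<Rightarrow> (nat \<Rightarrow> real) \<Rightarrow> real" where
  "fd n s x y = exp (\<Sum>i<n. x i * y i / s\<^sup>2 - (x i)\<^sup>2 / (2 * s\<^sup>2))"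

lemma gauss_vec_NN: "gauss_vec n s = PiM {..<n} (\<lambda>_. NN s)"
  by (simp add: gauss_vec_def NN_def)

lemma sets_NN[simp, measurable_cong]: "sets (NN s) = sets borel"
  by (simp add: NN_def)

lemma space_NN[simp]: "space (NN s) = UNIV"
  by (simp add: NN_def)

lemma prob_NN: "0 < s \<Longrightarrow> prob_space (NN s)"
  unfolding NN_def by (rule prob_space_normal_density)

lemma prob_ND: "0 < s \<Longrightarrow> prob_space (density lborel (normal_density c s))"
  by (rule prob_space_normal_density)

lemma ef_measurable[measurable]: "ef s c \<in> borel_measurable borel"
  unfolding ef_def by measurable

lemma nd_shift: "0 < s \<Longrightarrow> normal_density 0 s y * ef s c y = normal_density c s y"
proof -
  assume s: "0 < s"
  have eq: "-(y - c)\<^sup>2 / (2 * s\<^sup>2) = -(y - 0)\<^sup>2 / (2 * s\<^sup>2) + (c * y / s\<^sup>2 - c\<^sup>2 / (2 * s\<^sup>2))"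
    using s by (simp add: field_simps power2_eq_square)
  show ?thesis unfolding normal_density_def ef_def eq exp_add by (simp only: mult.assoc)
qed

lemma NN_shift_nn:
  assumes s: "0 < s" and g[measurable]: "g \<in> borel_measurable borel"
  shows "(\<integral>\<^sup>+z. g (c + z) \<partial>NN s) = (\<integral>\<^sup>+y. ennreal (ef s c y) * g y \<partial>NN s)"
  unfolding NN_def ef_def by (rule nshift_nn[OF s g])

lemma ND_eq_ef:
  assumes s: "0 < s" and A: "A \<in> sets borel"
  shows "emeasure (density lborel (normal_density c s)) A = (\<integral>\<^sup>+y. ennreal (ef s c y) * indicator A y \<partial>NN s)"
  using A s unfolding NN_def
  by (simp add: emeasure_density nn_integral_density mult.assoc[symmetric] ennreal_mult'[symmetric] nd_shift)

lemma NN_shift_set: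
  assumes s: "0 < s" and A: "A \<in> sets borel"
  shows "emeasure (NN s) {z. c + z \<in> A} = emeasure (density lborel (normal_density c s)) A"
proof -
  have m: "{z. c + z \<in> A} \<in> sets borel" using A by measurable
  have "emeasure (NN s) {z. c + z \<in> A} = (\<integral>\<^sup>+z. indicator {z. c + z \<in> A} z \<partial>NN s)"
    by (rule nn_integral_indicator[symmetric]) (simp add: m)
  also have "\<dots> = (\<integral>\<^sup>+z. indicator A (c + z) \<partial>NN s)"
    by (intro nn_integral_cong) (simp add: indicator_def)
  also have "\<dots> = (\<integral>\<^sup>+y. ennreal (ef s c y) * indicator A y \<partial>NN s)"
    by (rule NN_shift_nn[OF s borel_measurable_indicator[OF A]])
  finally show ?thesis using ND_eq_ef[OF s A] by simp
qed


lemma vadd_measurable[measurable]: "vadd n x \<in> measurable (Rn n) (Rn n)"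
  unfolding vadd_def Rn_def by measurable

lemma space_Rn: "space (Rn n) = PiE {..<n} (\<lambda>_. UNIV)"
  by (simp add: Rn_def space_PiM)

lemma sets_gauss_vec[measurable_cong]: "sets (gauss_vec n s) = sets (Rn n)"
  unfolding gauss_vec_NN Rn_def by (intro sets_PiM_cong) auto

lemma space_gauss_vec[simp]: "space (gauss_vec n s) = space (Rn n)"
  using sets_eq_imp_space_eq[OF sets_gauss_vec] .

lemma prob_gauss_vec: "0 < s \<Longrightarrow> prob_space (gauss_vec n s)"
  unfolding gauss_vec_NN by (intro prob_space_PiM prob_NN)

lemma fd_measurable[measurable]: "(\<lambda>y. fd n s x y) \<in> borel_measurable (Rn n)"
  unfolding fd_def Rn_def by measurable

lemma fd_measurable2[measurable]: "(\<lambda>(x, y). fd n s x y) \<in> borel_measurable (Rn n \<Otimes>\<^sub>M Rn n)"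
  unfolding fd_def Rn_def by measurable

lemma indicator_PiE_prod:
  assumes "y \<in> PiE I (\<lambda>_. UNIV)" "finite I"
  shows "indicator (PiE I A) y = (\<Prod>i\<in>I. indicator (A i) (y i) :: ennreal)"
proof (cases "\<forall>i\<in>I. y i \<in> A i")
  case True
  then show ?thesis using assms by (auto simp: indicator_def PiE_iff)
next
  case False
  then obtain i where "i \<in> I" "y i \<notin> A i" by auto
  then have "(\<Prod>i\<in>I. indicator (A i) (y i) :: ennreal) = 0"
    using assms by (intro prod_zero bexI[of _ i]) auto
  then show ?thesis using False by (auto simp: indicator_def PiE_iff)
qed

lemma fd_prod: "ennreal (fd n s x y) = (\<Prod>i<n. ennreal (ef s (x i) (y i)))"
  unfolding fd_def ef_def by (simp add: exp_sum prod_ennreal)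

lemma GX_distr:
  assumes s: "0 < s"
  shows "distr (gauss_vec n s) (Rn n) (vadd n x) = PiM {..<n} (\<lambda>i. density lborel (normal_density (x i) s))"
proof -
  interpret P: product_prob_space "\<lambda>i. density lborel (normal_density (x i) s)"
    by (intro product_prob_spaceI prob_ND s)
  interpret G: product_prob_space "\<lambda>_. NN s"
    by (intro product_prob_spaceI prob_NN s)
  show ?thesis
  proof (rule P.PiM_eqI)
    show "sets (distr (gauss_vec n s) (Rn n) (vadd n x)) = sets (PiM {..<n} (\<lambda>i. density lborel (normal_density (x i) s)))"
      by (simp add: Rn_def, intro sets_PiM_cong) auto
  next
    fix A assume A: "\<And>i. i \<in> {..<n} \<Longrightarrow> A i \<in> sets (density lborel (normal_density (x i) s))"
    then have A': "\<And>i. i \<in> {..<n} \<Longrightarrow> A i \<in> sets borel" by simp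
    have PA: "PiE {..<n} A \<in> sets (Rn n)"
      unfolding Rn_def using A' by (intro sets_PiM_I_finite) auto
    have pre: "vadd n x -` PiE {..<n} A \<inter> space (Rn n) = PiE {..<n} (\<lambda>i. {z. x i + z \<in> A i})"
      unfolding vadd_def space_Rn by (rule set_eqI) (simp add: PiE_iff)
    have "emeasure (distr (gauss_vec n s) (Rn n) (vadd n x)) (PiE {..<n} A)
        = emeasure (gauss_vec n s) (PiE {..<n} (\<lambda>i. {z. x i + z \<in> A i}))"
      using PA by (simp add: emeasure_distr pre)
    also have "\<dots> = (\<Prod>i<n. emeasure (NN s) {z. x i + z \<in> A i})"
      unfolding gauss_vec_NN using A' by (subst G.emeasure_PiM) auto
    also have "\<dots> = (\<Prod>i<n. emeasure (density lborel (normal_density (x i) s)) (A i))"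
      using A' by (intro prod.cong refl NN_shift_set s) auto
    finally show "emeasure (distr (gauss_vec n s) (Rn n) (vadd n x)) (PiE {..<n} A)
        = (\<Prod>i\<in>{..<n}. emeasure (density lborel (normal_density (x i) s)) (A i))" by simp
  qed simp
qed

lemma GX_density:
  assumes s: "0 < s"
  shows "density (gauss_vec n s) (\<lambda>y. ennreal (fd n s x y)) = PiM {..<n} (\<lambda>i. density lborel (normal_density (x i) s))"
proof -
  interpret P: product_prob_space "\<lambda>i. density lborel (normal_density (x i) s)"
    by (intro product_prob_spaceI prob_ND s)
  interpret G: product_prob_space "\<lambda>_. NN s"
    by (intro product_prob_spaceI prob_NN s)
  show ?thesis
  proof (rule P.PiM_eqI)
    show "sets (density (gauss_vec n s) (\<lambda>y. ennreal (fd n s x y))) = sets (PiM {..<n} (\<lambda>i. density lborel (normal_density (x i) s)))"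
      by (simp add: gauss_vec_NN, intro sets_PiM_cong) auto
  next
    fix A assume A: "\<And>i. i \<in> {..<n} \<Longrightarrow> A i \<in> sets (density lborel (normal_density (x i) s))"
    then have A': "\<And>i. i \<in> {..<n} \<Longrightarrow> A i \<in> sets borel" by simp
    have PA: "PiE {..<n} A \<in> sets (gauss_vec n s)"
      unfolding gauss_vec_NN using A' by (intro sets_PiM_I_finite) auto
    have "emeasure (density (gauss_vec n s) (\<lambda>y. ennreal (fd n s x y))) (PiE {..<n} A)
        = (\<integral>\<^sup>+y. ennreal (fd n s x y) * indicator (PiE {..<n} A) y \<partial>gauss_vec n s)"
      using PA by (simp add: emeasure_density)
    also have "\<dots> = (\<integral>\<^sup>+y. (\<Prod>i<n. ennreal (ef s (x i) (y i)) * indicator (A i) (y i)) \<partial>PiM {..<n} (\<lambda>_. NN s))"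
      unfolding gauss_vec_NN
      by (intro nn_integral_cong) (simp add: fd_prod indicator_PiE_prod space_PiM prod.distrib)
    also have "\<dots> = (\<Prod>i<n. (\<integral>\<^sup>+y. ennreal (ef s (x i) y) * indicator (A i) y \<partial>NN s))"
      using A' by (subst G.product_nn_integral_prod) auto
    also have "\<dots> = (\<Prod>i<n. emeasure (density lborel (normal_density (x i) s)) (A i))"
      using A' by (intro prod.cong refl ND_eq_ef[symmetric] s) auto
    finally show "emeasure (density (gauss_vec n s) (\<lambda>y. ennreal (fd n s x y))) (PiE {..<n} A)
        = (\<Prod>i\<in>{..<n}. emeasure (density lborel (normal_density (x i) s)) (A i))" by simp
  qed simp
qed

lemma G_shift_nn:
  assumes s: "0 < s" and g[measurable]: "g \<in> borel_measurable (Rn n)"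
  shows "(\<integral>\<^sup>+z. g (vadd n x z) \<partial>gauss_vec n s) = (\<integral>\<^sup>+y. ennreal (fd n s x y) * g y \<partial>gauss_vec n s)"
proof -
  have "(\<integral>\<^sup>+z. g (vadd n x z) \<partial>gauss_vec n s) = (\<integral>\<^sup>+y. g y \<partial>distr (gauss_vec n s) (Rn n) (vadd n x))"
    by (subst nn_integral_distr) (auto simp: measurable_cong_sets[OF sets_gauss_vec])
  also have "\<dots> = (\<integral>\<^sup>+y. g y \<partial>density (gauss_vec n s) (\<lambda>y. ennreal (fd n s x y)))"
    by (simp add: GX_distr GX_density s)
  also have "\<dots> = (\<integral>\<^sup>+y. ennreal (fd n s x y) * g y \<partial>gauss_vec n s)"
    by (subst nn_integral_density) (auto simp: measurable_cong_sets[OF sets_gauss_vec])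
  finally show ?thesis .
qed


declare sets_gauss_vec[simp]

lemma vadd2_measurable[measurable]: "(\<lambda>\<omega>. vadd n (fst \<omega>) (snd \<omega>)) \<in> measurable (Rn n \<Otimes>\<^sub>M Rn n) (Rn n)"
  unfolding vadd_def Rn_def by measurable

lemma vadd2_measurable'[measurable]: "(\<lambda>(x, z). vadd n x z) \<in> measurable (Rn n \<Otimes>\<^sub>M Rn n) (Rn n)"
  using vadd2_measurable by (simp add: split_beta')

locale chan =
  fixes n :: nat and s R :: real and mu :: "(nat \<Rightarrow> real) measure"
  assumes s_pos: "0 < s" and mu_prob: "prob_space mu"
    and sets_mu[measurable_cong]: "sets mu = sets (Rn n)"
    and mu_bnd: "AE x in mu. vnorm n x \<le> R"
begin

abbreviation "G \<equiv> gauss_vec n s"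
definition Yf :: "(nat \<Rightarrow> real) \<times> (nat \<Rightarrow> real) \<Rightarrow> nat \<Rightarrow> real" where
  "Yf \<omega> = vadd n (fst \<omega>) (snd \<omega>)"
definition pe :: "(nat \<Rightarrow> real) \<Rightarrow> ennreal" where
  "pe y = (\<integral>\<^sup>+x. ennreal (fd n s x y) \<partial>mu)"
definition pd :: "(nat \<Rightarrow> real) \<Rightarrow> real" where
  "pd y = enn2real (pe y)"

sublocale M: prob_space mu by (rule mu_prob)
sublocale GG: prob_space G by (rule prob_gauss_vec[OF s_pos])
sublocale MG: pair_prob_space mu G ..

lemma space_mu: "space mu = space (Rn n)"
  using sets_eq_imp_space_eq[OF sets_mu] .

lemma Yf_measurable[measurable]: "Yf \<in> measurable (mu \<Otimes>\<^sub>M G) (Rn n)"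
  unfolding Yf_def by measurable

lemma pe_measurable[measurable]: "pe \<in> borel_measurable (Rn n)"
  unfolding pe_def by measurable

lemma pd_measurable[measurable]: "pd \<in> borel_measurable (Rn n)"
  unfolding pd_def by measurable

lemma F1:
  assumes g[measurable]: "g \<in> borel_measurable (Rn n \<Otimes>\<^sub>M Rn n)"
  shows "(\<integral>\<^sup>+\<omega>. g (fst \<omega>, Yf \<omega>) \<partial>(mu \<Otimes>\<^sub>M G)) = (\<integral>\<^sup>+\<omega>. ennreal (fd n s (fst \<omega>) (snd \<omega>)) * g \<omega> \<partial>(mu \<Otimes>\<^sub>M G))"
proof -
  have "(\<integral>\<^sup>+\<omega>. g (fst \<omega>, Yf \<omega>) \<partial>(mu \<Otimes>\<^sub>M G)) = (\<integral>\<^sup>+x. \<integral>\<^sup>+z. g (x, vadd n x z) \<partial>G \<partial>mu)"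
    by (subst GG.nn_integral_fst[symmetric]) (auto simp: Yf_def split_beta')
  also have "\<dots> = (\<integral>\<^sup>+x. \<integral>\<^sup>+y. ennreal (fd n s x y) * g (x, y) \<partial>G \<partial>mu)"
    by (intro nn_integral_cong G_shift_nn s_pos) (simp add: space_mu)
  also have "\<dots> = (\<integral>\<^sup>+\<omega>. ennreal (fd n s (fst \<omega>) (snd \<omega>)) * g \<omega> \<partial>(mu \<Otimes>\<^sub>M G))"
    by (subst GG.nn_integral_fst[symmetric]) (auto simp: split_beta')
  finally show ?thesis .
qed

definition J where "J = distr (mu \<Otimes>\<^sub>M G) (Rn n \<Otimes>\<^sub>M Rn n) (\<lambda>\<omega>. (fst \<omega>, Yf \<omega>))"
definition P where "P = distr (mu \<Otimes>\<^sub>M G) (Rn n) Yf"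

lemma F2: "J = density (mu \<Otimes>\<^sub>M G) (\<lambda>\<omega>. ennreal (fd n s (fst \<omega>) (snd \<omega>)))"
proof (rule measure_eqI)
  show "sets J = sets (density (mu \<Otimes>\<^sub>M G) (\<lambda>\<omega>. ennreal (fd n s (fst \<omega>) (snd \<omega>))))"
    unfolding J_def by (simp, intro sets_pair_measure_cong) (auto simp: sets_mu)
next
  fix A assume "A \<in> sets J"
  then have A[measurable]: "A \<in> sets (Rn n \<Otimes>\<^sub>M Rn n)" by (simp add: J_def)
  have "emeasure J A = (\<integral>\<^sup>+y. indicator A y \<partial>J)"
    using A by (simp add: J_def)
  also have "\<dots> = (\<integral>\<^sup>+\<omega>. indicator A (fst \<omega>, Yf \<omega>) \<partial>(mu \<Otimes>\<^sub>M G))"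
    unfolding J_def by (subst nn_integral_distr) auto
  also have "\<dots> = (\<integral>\<^sup>+\<omega>. ennreal (fd n s (fst \<omega>) (snd \<omega>)) * indicator A \<omega> \<partial>(mu \<Otimes>\<^sub>M G))"
    by (rule F1) measurable
  also have "\<dots> = emeasure (density (mu \<Otimes>\<^sub>M G) (\<lambda>\<omega>. ennreal (fd n s (fst \<omega>) (snd \<omega>)))) A"
    by (subst emeasure_density) auto
  finally show "emeasure J A = emeasure (density (mu \<Otimes>\<^sub>M G) (\<lambda>\<omega>. ennreal (fd n s (fst \<omega>) (snd \<omega>)))) A" .
qed

lemma F3: "P = density G pe"
proof (rule measure_eqI)
  show "sets P = sets (density G pe)"
    unfolding P_def by simp
next
  fix A assume "A \<in> sets P"
  then have A[measurable]: "A \<in> sets (Rn n)" by (simp add: P_def)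
  have "emeasure P A = (\<integral>\<^sup>+y. indicator A y \<partial>P)"
    using A by (simp add: P_def)
  also have "\<dots> = (\<integral>\<^sup>+\<omega>. indicator A (snd (fst \<omega>, Yf \<omega>)) \<partial>(mu \<Otimes>\<^sub>M G))"
    unfolding P_def by (subst nn_integral_distr) auto
  also have "\<dots> = (\<integral>\<^sup>+\<omega>. ennreal (fd n s (fst \<omega>) (snd \<omega>)) * indicator A (snd \<omega>) \<partial>(mu \<Otimes>\<^sub>M G))"
    by (rule F1[where g="\<lambda>\<omega>. indicator A (snd \<omega>)"]) measurable
  also have "\<dots> = (\<integral>\<^sup>+y. \<integral>\<^sup>+x. ennreal (fd n s x y) * indicator A y \<partial>mu \<partial>G)"
    by (subst MG.nn_integral_snd[symmetric]) (auto simp: split_beta')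
  also have "\<dots> = (\<integral>\<^sup>+y. pe y * indicator A y \<partial>G)"
    unfolding pe_def by (intro nn_integral_cong nn_integral_multc) measurable
  also have "\<dots> = emeasure (density G pe) A"
    by (subst emeasure_density) auto
  finally show "emeasure P A = emeasure (density G pe) A" .
qed

end

definition vn2 :: "nat \<Rightarrow> (nat \<Rightarrow> real) \<Rightarrow> real" where
  "vn2 n y = (\<Sum>i<n. (y i)\<^sup>2)"

lemma vn2_measurable[measurable]: "vn2 n \<in> borel_measurable (Rn n)"
  unfolding vn2_def Rn_def by measurable

lemma vn2_nonneg: "0 \<le> vn2 n y"
  unfolding vn2_def by (simp add: sum_nonneg)

lemma vnorm_vn2: "vnorm n x \<le> R \<Longrightarrow> vn2 n x \<le> R\<^sup>2"
  unfolding vnorm_def vn2_def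
  by (metis real_sqrt_le_iff real_sqrt_pow2 sum_nonneg zero_le_power2 power_mono real_sqrt_ge_zero)

lemma fd_pos: "0 < fd n s x y"
  unfolding fd_def by simp

lemma fd_le:
  assumes s: "0 < s" shows "fd n s x y \<le> exp (vn2 n y / (2 * s\<^sup>2))"
proof -
  have "(\<Sum>i<n. x i * y i / s\<^sup>2 - (x i)\<^sup>2 / (2 * s\<^sup>2)) \<le> (\<Sum>i<n. (y i)\<^sup>2 / (2 * s\<^sup>2))"
  proof (intro sum_mono)
    fix i
    have "0 \<le> (x i - y i)\<^sup>2" by simp
    then have "x i * y i - (x i)\<^sup>2 / 2 \<le> (y i)\<^sup>2 / 2" by (simp add: power2_eq_square algebra_simps)
    then have "(x i * y i - (x i)\<^sup>2 / 2) / s\<^sup>2 \<le> ((y i)\<^sup>2 / 2) / s\<^sup>2"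
      using s by (intro divide_right_mono) auto
    then show "x i * y i / s\<^sup>2 - (x i)\<^sup>2 / (2 * s\<^sup>2) \<le> (y i)\<^sup>2 / (2 * s\<^sup>2)"
      by (simp add: diff_divide_distrib)
  qed
  also have "\<dots> = vn2 n y / (2 * s\<^sup>2)" by (simp add: vn2_def sum_divide_distrib)
  finally show ?thesis unfolding fd_def by simp
qed

lemma fd_ge:
  assumes s: "0 < s" shows "exp (- (vn2 n x + vn2 n y / 2) / s\<^sup>2) \<le> fd n s x y"
proof -
  have "(\<Sum>i<n. (- ((x i)\<^sup>2 + (y i)\<^sup>2 / 2)) / s\<^sup>2) \<le> (\<Sum>i<n. x i * y i / s\<^sup>2 - (x i)\<^sup>2 / (2 * s\<^sup>2))"
  proof (intro sum_mono)
    fix i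
    have "0 \<le> (x i + y i)\<^sup>2" by simp
    then have "- ((x i)\<^sup>2 + (y i)\<^sup>2 / 2) \<le> x i * y i - (x i)\<^sup>2 / 2" by (simp add: power2_eq_square algebra_simps)
    then have "(- ((x i)\<^sup>2 + (y i)\<^sup>2 / 2)) / s\<^sup>2 \<le> (x i * y i - (x i)\<^sup>2 / 2) / s\<^sup>2"
      using s by (intro divide_right_mono) auto
    then show "(- ((x i)\<^sup>2 + (y i)\<^sup>2 / 2)) / s\<^sup>2 \<le> x i * y i / s\<^sup>2 - (x i)\<^sup>2 / (2 * s\<^sup>2)"
      by (simp add: diff_divide_distrib)
  qed
  moreover have "(\<Sum>i<n. (- ((x i)\<^sup>2 + (y i)\<^sup>2 / 2)) / s\<^sup>2) = - (vn2 n x + vn2 n y / 2) / s\<^sup>2"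
    by (simp add: vn2_def sum_divide_distrib[symmetric] sum_subtractf sum_negf)
  ultimately show ?thesis unfolding fd_def by simp
qed

lemma ln_fd: "ln (fd n s x y) = (\<Sum>i<n. x i * y i / s\<^sup>2 - (x i)\<^sup>2 / (2 * s\<^sup>2))"
  unfolding fd_def by simp

context chan
begin

lemma AE_vn2: "AE x in mu. vn2 n x \<le> R\<^sup>2"
  using mu_bnd by eventually_elim (rule vnorm_vn2)

lemma R_nonneg: "0 \<le> R"
proof -
  have "AE x in mu. 0 \<le> R"
    using mu_bnd
  proof eventually_elim
    case (elim x)
    have "0 \<le> vnorm n x" by (simp add: vnorm_def sum_nonneg)
    then show ?case using elim by linarith
  qed
  then show ?thesis by simp
qed

lemma pe_le: "pe y \<le> ennreal (exp (vn2 n y / (2 * s\<^sup>2)))"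
proof -
  have "pe y \<le> (\<integral>\<^sup>+x. ennreal (exp (vn2 n y / (2 * s\<^sup>2))) \<partial>mu)"
    unfolding pe_def by (intro nn_integral_mono ennreal_leI fd_le s_pos)
  also have "\<dots> = ennreal (exp (vn2 n y / (2 * s\<^sup>2)))" by (simp add: M.emeasure_space_1)
  finally show ?thesis .
qed

lemma pe_ge: "ennreal (exp (- (R\<^sup>2 + vn2 n y / 2) / s\<^sup>2)) \<le> pe y"
proof -
  have "ennreal (exp (- (R\<^sup>2 + vn2 n y / 2) / s\<^sup>2)) = (\<integral>\<^sup>+x. ennreal (exp (- (R\<^sup>2 + vn2 n y / 2) / s\<^sup>2)) \<partial>mu)"
    by (simp add: M.emeasure_space_1)
  also have "\<dots> \<le> pe y"
    unfolding pe_def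
  proof (intro nn_integral_mono_AE)
    show "AE x in mu. ennreal (exp (- (R\<^sup>2 + vn2 n y / 2) / s\<^sup>2)) \<le> ennreal (fd n s x y)"
      using AE_vn2
    proof eventually_elim
      case (elim x)
      have "exp (- (R\<^sup>2 + vn2 n y / 2) / s\<^sup>2) \<le> exp (- (vn2 n x + vn2 n y / 2) / s\<^sup>2)"
        using elim s_pos by (simp add: divide_right_mono)
      also have "\<dots> \<le> fd n s x y" by (rule fd_ge[OF s_pos])
      finally show ?case by (rule ennreal_leI)
    qed
  qed
  finally show ?thesis .
qed

lemma pe_eq: "pe y = ennreal (pd y)"
  unfolding pd_def using pe_le[of y] by (cases "pe y") (auto simp: top_unique)

lemma pd_ge: "exp (- (R\<^sup>2 + vn2 n y / 2) / s\<^sup>2) \<le> pd y"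
  using pe_ge[of y] unfolding pe_eq by (simp add: ennreal_le_iff2)

lemma pd_le: "pd y \<le> exp (vn2 n y / (2 * s\<^sup>2))"
  using pe_le[of y] unfolding pe_eq by (simp add: ennreal_le_iff2)

lemma pd_pos: "0 < pd y"
  using pd_ge[of y] by (rule less_le_trans[rotated]) simp

lemma ln_pd_bound: "\<bar>ln (pd y)\<bar> \<le> (R\<^sup>2 + vn2 n y) / s\<^sup>2"
proof -
  have "ln (pd y) \<le> vn2 n y / (2 * s\<^sup>2)"
  proof -
    have "ln (pd y) \<le> ln (exp (vn2 n y / (2 * s\<^sup>2)))"
      using pd_le[of y] pd_pos[of y] by (subst ln_le_cancel_iff) auto
    then show ?thesis by simp
  qed
  also have "\<dots> \<le> (R\<^sup>2 + vn2 n y) / s\<^sup>2"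
    using s_pos vn2_nonneg[of n y] by (simp add: field_simps)
  finally have 1: "ln (pd y) \<le> (R\<^sup>2 + vn2 n y) / s\<^sup>2" .
  have "- (R\<^sup>2 + vn2 n y / 2) / s\<^sup>2 \<le> ln (pd y)"
  proof -
    have "ln (exp (- (R\<^sup>2 + vn2 n y / 2) / s\<^sup>2)) \<le> ln (pd y)"
      using pd_ge[of y] pd_pos[of y] by (subst ln_le_cancel_iff) auto
    then show ?thesis by simp
  qed
  moreover have "- ((R\<^sup>2 + vn2 n y) / s\<^sup>2) \<le> - (R\<^sup>2 + vn2 n y / 2) / s\<^sup>2"
    using s_pos vn2_nonneg[of n y] by (simp add: field_simps)
  ultimately show ?thesis using 1 by linarith
qed

end

lemma NN_moment1:
  assumes s: "0 < s"
  shows "integrable (NN s) (\<lambda>t. t)" "(\<integral>t. t \<partial>NN s) = 0"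
proof -
  have i: "integrable lborel (\<lambda>x. normal_density 0 s x * x)"
    using s by (rule integrable_normal_moment_nz_1)
  show "integrable (NN s) (\<lambda>t. t)"
    unfolding NN_def by (subst integrable_density) (auto simp: i s)
  show "(\<integral>t. t \<partial>NN s) = 0"
    unfolding NN_def using integral_normal_moment_nz_1[where \<mu>=0 and \<sigma>=s, OF s]
    by (subst integral_density) auto
qed

lemma NN_moment2:
  assumes s: "0 < s"
  shows "integrable (NN s) (\<lambda>t. t\<^sup>2)" "(\<integral>t. t\<^sup>2 \<partial>NN s) = s\<^sup>2"
proof -
  have e: "(\<lambda>x. normal_density 0 s x * x\<^sup>2) = (\<lambda>x. normal_density 0 s x * (x - 0) ^ 2)" by simp
  have i: "integrable lborel (\<lambda>x. normal_density 0 s x * x\<^sup>2)"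
    unfolding e using s by (rule integrable_normal_moment)
  show "integrable (NN s) (\<lambda>t. t\<^sup>2)"
    unfolding NN_def by (subst integrable_density) (auto simp: i s)
  have "(\<integral>x. normal_density 0 s x * x\<^sup>2 \<partial>lborel) = s\<^sup>2"
    using integral_normal_moment_even[where \<mu>=0 and \<sigma>=s and k=1, OF s] s by simp
  then show "(\<integral>t. t\<^sup>2 \<partial>NN s) = s\<^sup>2"
    unfolding NN_def by (subst integral_density) auto
qed

lemma G_coord:
  fixes h :: "real \<Rightarrow> real"
  assumes s: "0 < s" and i: "i < n" and h[measurable]: "h \<in> borel_measurable borel"
  shows "integrable (gauss_vec n s) (\<lambda>z. h (z i)) \<longleftrightarrow> integrable (NN s) h"
    and "(\<integral>z. h (z i) \<partial>gauss_vec n s) = (\<integral>t. h t \<partial>NN s)"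
proof -
  have d: "distr (gauss_vec n s) (NN s) (\<lambda>\<omega>. \<omega> i) = NN s"
    unfolding gauss_vec_NN using i by (intro distr_PiM_component prob_NN s) auto
  have m: "(\<lambda>\<omega>. \<omega> i) \<in> measurable (gauss_vec n s) (NN s)"
    unfolding gauss_vec_NN using i by (intro measurable_component_singleton) auto
  show "integrable (gauss_vec n s) (\<lambda>z. h (z i)) \<longleftrightarrow> integrable (NN s) h"
    using integrable_distr_eq[OF m, of h] unfolding d by simp
  show "(\<integral>z. h (z i) \<partial>gauss_vec n s) = (\<integral>t. h t \<partial>NN s)"
    using integral_distr[OF m, of h] unfolding d by simp
qed

lemma G_vn2:
  assumes s: "0 < s"
  shows "integrable (gauss_vec n s) (vn2 n)" "(\<integral>z. vn2 n z \<partial>gauss_vec n s) = n * s\<^sup>2"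
proof -
  have sq: "integrable (gauss_vec n s) (\<lambda>z. (z i)\<^sup>2)" if "i < n" for i
    using G_coord(1)[OF s that, of "\<lambda>t. t\<^sup>2"] NN_moment2[OF s] by simp
  show "integrable (gauss_vec n s) (vn2 n)"
    unfolding vn2_def by (intro Bochner_Integration.integrable_sum sq) simp
  have "(\<integral>z. vn2 n z \<partial>gauss_vec n s) = (\<Sum>i<n. \<integral>z. (z i)\<^sup>2 \<partial>gauss_vec n s)"
    unfolding vn2_def by (rule Bochner_Integration.integral_sum) (rule sq, simp)
  also have "\<dots> = (\<Sum>i<n. s\<^sup>2)"
    using G_coord(2)[OF s, of _ n "\<lambda>t. t\<^sup>2"] NN_moment2[OF s] by (intro sum.cong) auto
  finally show "(\<integral>z. vn2 n z \<partial>gauss_vec n s) = n * s\<^sup>2" by simp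
qed

context chan
begin

lemma distr_fst: "distr (mu \<Otimes>\<^sub>M G) (Rn n) fst = mu"
proof -
  have "distr (mu \<Otimes>\<^sub>M G) (Rn n) fst = distr (mu \<Otimes>\<^sub>M G) mu fst"
    by (intro distr_cong) (auto simp: sets_mu)
  then show ?thesis using GG.distr_pair_fst by simp
qed

lemma distr_snd: "distr (mu \<Otimes>\<^sub>M G) (Rn n) snd = G"
proof (intro measure_eqI)
  fix A assume "A \<in> sets (distr (mu \<Otimes>\<^sub>M G) (Rn n) snd)"
  then have A: "A \<in> sets G" by simp
  have "emeasure (distr (mu \<Otimes>\<^sub>M G) (Rn n) snd) A = emeasure (mu \<Otimes>\<^sub>M G) (space mu \<times> A)"
    using A by (subst emeasure_distr) (auto simp: space_pair_measure intro!: arg_cong2[where f=emeasure] dest: sets.sets_into_space)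
  also have "\<dots> = emeasure G A"
    using A by (simp add: GG.emeasure_pair_measure_Times M.emeasure_space_1)
  finally show "emeasure (distr (mu \<Otimes>\<^sub>M G) (Rn n) snd) A = emeasure G A" .
qed simp

lemma int_fst:
  fixes h :: "(nat \<Rightarrow> real) \<Rightarrow> real"
  assumes h[measurable]: "h \<in> borel_measurable (Rn n)"
  shows "integrable (mu \<Otimes>\<^sub>M G) (\<lambda>\<omega>. h (fst \<omega>)) \<longleftrightarrow> integrable mu h"
    and "(\<integral>\<omega>. h (fst \<omega>) \<partial>(mu \<Otimes>\<^sub>M G)) = (\<integral>x. h x \<partial>mu)"
  using integrable_distr_eq[of fst "mu \<Otimes>\<^sub>M G" "Rn n" h] integral_distr[of fst "mu \<Otimes>\<^sub>M G" "Rn n" h]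
  unfolding distr_fst by auto

lemma int_snd:
  fixes h :: "(nat \<Rightarrow> real) \<Rightarrow> real"
  assumes h[measurable]: "h \<in> borel_measurable (Rn n)"
  shows "integrable (mu \<Otimes>\<^sub>M G) (\<lambda>\<omega>. h (snd \<omega>)) \<longleftrightarrow> integrable G h"
    and "(\<integral>\<omega>. h (snd \<omega>) \<partial>(mu \<Otimes>\<^sub>M G)) = (\<integral>x. h x \<partial>G)"
  using integrable_distr_eq[of snd "mu \<Otimes>\<^sub>M G" "Rn n" h] integral_distr[of snd "mu \<Otimes>\<^sub>M G" "Rn n" h]
  unfolding distr_snd by auto

lemma AE_fst: "AE x in mu. Q x \<Longrightarrow> AE \<omega> in mu \<Otimes>\<^sub>M G. Q (fst \<omega>)"
  using AE_distrD[of fst "mu \<Otimes>\<^sub>M G" "Rn n" Q] unfolding distr_fst by auto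

lemma mu_vn2: "integrable mu (vn2 n)"
  by (rule M.integrable_const_bound[where B="R\<^sup>2"]) (use AE_vn2 in \<open>auto simp: vn2_nonneg\<close>)

lemma sets_P[simp, measurable_cong]: "sets P = sets (Rn n)"
  by (simp add: P_def)

lemma prob_P: "prob_space P"
  unfolding P_def by (rule MG.prob_space_distr) simp

lemma P_dens: "P = density G (\<lambda>y. ennreal (pd y))"
proof -
  have "pe = (\<lambda>y. ennreal (pd y))" by (rule ext) (rule pe_eq)
  then show ?thesis using F3 by simp
qed

lemma mu_P: "mu \<Otimes>\<^sub>M P = density (mu \<Otimes>\<^sub>M G) (\<lambda>\<omega>. ennreal (pd (snd \<omega>)))"
proof -
  interpret PP: prob_space P by (rule prob_P)
  have "mu \<Otimes>\<^sub>M P = density mu (\<lambda>_. 1) \<Otimes>\<^sub>M density G (\<lambda>y. ennreal (pd y))"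
    by (simp add: density_1 P_dens[symmetric])
  also have "\<dots> = density (mu \<Otimes>\<^sub>M G) (\<lambda>(x, y). 1 * ennreal (pd y))"
    by (rule pair_measure_density) (auto simp: P_dens[symmetric] intro: GG.sigma_finite_measure_axioms PP.sigma_finite_measure_axioms)
  finally show ?thesis by (simp add: split_beta')
qed

definition rn :: "(nat \<Rightarrow> real) \<times> (nat \<Rightarrow> real) \<Rightarrow> real" where
  "rn \<omega> = fd n s (fst \<omega>) (snd \<omega>) / pd (snd \<omega>)"

lemma rn_measurable[measurable]: "rn \<in> borel_measurable (Rn n \<Otimes>\<^sub>M Rn n)"
  unfolding rn_def by measurable

lemma rn_pos: "0 < rn \<omega>"
  unfolding rn_def using fd_pos pd_pos by simp

lemma J_dens: "J = density (mu \<Otimes>\<^sub>M P) (\<lambda>\<omega>. ennreal (rn \<omega>))"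
proof -
  have "density (mu \<Otimes>\<^sub>M P) (\<lambda>\<omega>. ennreal (rn \<omega>)) =
        density (mu \<Otimes>\<^sub>M G) (\<lambda>\<omega>. ennreal (pd (snd \<omega>)) * ennreal (rn \<omega>))"
    unfolding mu_P by (subst density_density_eq) auto
  also have "\<dots> = density (mu \<Otimes>\<^sub>M G) (\<lambda>\<omega>. ennreal (fd n s (fst \<omega>) (snd \<omega>)))"
  proof (intro density_cong AE_I2)
    fix \<omega> :: "(nat \<Rightarrow> real) \<times> (nat \<Rightarrow> real)"
    have "ennreal (pd (snd \<omega>)) * ennreal (rn \<omega>) = ennreal (pd (snd \<omega>) * rn \<omega>)"
      using pd_pos[of "snd \<omega>"] rn_pos[of \<omega>] by (subst ennreal_mult) auto
    also have "pd (snd \<omega>) * rn \<omega> = fd n s (fst \<omega>) (snd \<omega>)"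
      using pd_pos[of "snd \<omega>"] by (simp add: rn_def)
    finally show "ennreal (pd (snd \<omega>)) * ennreal (rn \<omega>) = ennreal (fd n s (fst \<omega>) (snd \<omega>))" .
  qed auto
  finally show ?thesis using F2 by simp
qed

lemma KL_eq: "chan_MI n mu G = (\<integral>\<omega>. ln (rn \<omega>) \<partial>J)"
proof -
  interpret PP: prob_space P by (rule prob_P)
  interpret MP: pair_prob_space mu P ..
  have Y: "(\<lambda>p. restrict (\<lambda>i. fst p i + snd p i) {..<n}) = Yf"
    by (auto simp: Yf_def vadd_def)
  have "chan_MI n mu G = KL_divergence (exp 1) (mu \<Otimes>\<^sub>M P) J"
    unfolding chan_MI_def Y MG.mutual_information_def distr_fst J_def P_def ..
  also have "\<dots> = (\<integral>\<omega>. ln (enn2real (RN_deriv (mu \<Otimes>\<^sub>M P) J \<omega>)) \<partial>J)"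
    unfolding KL_divergence_def entropy_density_def by (simp add: log_def o_def)
  also have "\<dots> = (\<integral>\<omega>. ln (rn \<omega>) \<partial>J)"
  proof (rule integral_cong_AE)
    have ae: "AE \<omega> in mu \<Otimes>\<^sub>M P. ennreal (rn \<omega>) = RN_deriv (mu \<Otimes>\<^sub>M P) J \<omega>"
      by (rule MP.RN_deriv_unique) (auto simp: J_dens)
    have "AE \<omega> in density (mu \<Otimes>\<^sub>M P) (\<lambda>\<omega>. ennreal (rn \<omega>)). ennreal (rn \<omega>) = RN_deriv (mu \<Otimes>\<^sub>M P) J \<omega>"
      by (subst AE_density) (auto intro: AE_mp[OF ae])
    then have "AE \<omega> in J. ennreal (rn \<omega>) = RN_deriv (mu \<Otimes>\<^sub>M P) J \<omega>"
      by (simp only: J_dens[symmetric])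
    then show "AE \<omega> in J. ln (enn2real (RN_deriv (mu \<Otimes>\<^sub>M P) J \<omega>)) = ln (rn \<omega>)"
      by eventually_elim (metis enn2real_ennreal less_imp_le rn_pos)
  qed (auto simp: J_def)
  finally show ?thesis .
qed

end

lemma NN_abs: "0 < s \<Longrightarrow> integrable (NN s) abs"
proof -
  assume s: "0 < s"
  interpret prob_space "NN s" by (rule prob_NN[OF s])
  have "integrable (NN s) (\<lambda>t. 1 + t\<^sup>2)"
    using NN_moment2[OF s] by (intro Bochner_Integration.integrable_add) auto
  then show ?thesis
  proof (rule Bochner_Integration.integrable_bound)
    show "AE x in NN s. norm \<bar>x\<bar> \<le> norm (1 + x\<^sup>2)"
    proof (intro AE_I2)
      fix x :: real
      have "\<bar>x\<bar> \<le> 1 + x\<^sup>2"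
      proof (cases "\<bar>x\<bar> \<le> 1")
        case False
        then have "\<bar>x\<bar> * 1 \<le> \<bar>x\<bar> * \<bar>x\<bar>" by (intro mult_left_mono) auto
        then show ?thesis by (simp add: power2_eq_square)
      next
        case True
        then show ?thesis using zero_le_power2[of x] by linarith
      qed
      then show "norm \<bar>x\<bar> \<le> norm (1 + x\<^sup>2)" by simp
    qed
  qed simp
qed

lemma sq_sum_le: "(a + b)\<^sup>2 \<le> 2 * a\<^sup>2 + 2 * (b::real)\<^sup>2"
proof -
  have "0 \<le> (a - b)\<^sup>2" by simp
  then show ?thesis by (simp add: power2_eq_square algebra_simps)
qed

lemma vn2_vadd: "vn2 n (vadd n x z) \<le> 2 * vn2 n x + 2 * vn2 n z"
  unfolding vn2_def vadd_def by (simp add: sum_distrib_left sum.distrib[symmetric] sq_sum_le sum_mono)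

lemma coord_le_vn2: "i < n \<Longrightarrow> (x i)\<^sup>2 \<le> vn2 n x"
  unfolding vn2_def by (rule member_le_sum) auto

lemma coord_measurable: "(\<lambda>x. x i) \<in> borel_measurable (Rn n)"
proof (cases "i < n")
  case True
  then show ?thesis unfolding Rn_def by (intro measurable_component_singleton) auto
next
  case False
  have "(\<lambda>x. undefined :: real) \<in> borel_measurable (Rn n)" by simp
  then show ?thesis
    by (rule measurable_cong[THEN iffD1, rotated]) (use False in \<open>auto simp: space_Rn PiE_def extensional_def\<close>)
qed

lemma fst_coord_measurable[measurable]: "(\<lambda>\<omega>. fst \<omega> i) \<in> borel_measurable (Rn n \<Otimes>\<^sub>M Rn n)"
  by (rule measurable_compose[OF measurable_fst coord_measurable])

lemma snd_coord_measurable[measurable]: "(\<lambda>\<omega>. snd \<omega> i) \<in> borel_measurable (Rn n \<Otimes>\<^sub>M Rn n)"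
  by (rule measurable_compose[OF measurable_snd coord_measurable])

context chan
begin

lemma abs_coord: "AE x in mu. \<forall>i<n. \<bar>x i\<bar> \<le> R"
  using AE_vn2
proof eventually_elim
  case (elim x)
  show ?case
  proof safe
    fix i assume "i < n"
    then have "(x i)\<^sup>2 \<le> R\<^sup>2" using coord_le_vn2[of i n x] elim by linarith
    then show "\<bar>x i\<bar> \<le> R" using R_nonneg power2_le_imp_le[of "\<bar>x i\<bar>" R] by simp
  qed
qed

lemma int_a1: "i < n \<Longrightarrow> integrable (mu \<Otimes>\<^sub>M G) (\<lambda>\<omega>. (fst \<omega> i)\<^sup>2)"
proof -
  assume i: "i < n"
  have "integrable mu (\<lambda>x. (x i)\<^sup>2)"
  proof (rule M.integrable_const_bound[where B="R\<^sup>2"])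
    show "AE x in mu. norm ((x i)\<^sup>2) \<le> R\<^sup>2"
      using AE_vn2 by eventually_elim (use coord_le_vn2[OF i] in \<open>auto intro: order_trans\<close>)
    show "(\<lambda>x. (x i)\<^sup>2) \<in> borel_measurable mu"
      using i by (simp add: measurable_cong_sets[OF sets_mu refl] Rn_def)
  qed
  then show ?thesis using int_fst(1)[of "\<lambda>x. (x i)\<^sup>2"] i by (simp add: Rn_def)
qed

lemma int_a2: "i < n \<Longrightarrow> integrable (mu \<Otimes>\<^sub>M G) (\<lambda>\<omega>. fst \<omega> i * snd \<omega> i)"
proof -
  assume i: "i < n"
  have "integrable G (\<lambda>z. \<bar>z i\<bar>)"
    using G_coord(1)[where h=abs, OF s_pos i] NN_abs[OF s_pos] by simp
  then have "integrable (mu \<Otimes>\<^sub>M G) (\<lambda>\<omega>. R * \<bar>snd \<omega> i\<bar>)"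
    using int_snd(1)[of "\<lambda>z. \<bar>z i\<bar>"] i by (auto simp: Rn_def)
  then show ?thesis
  proof (rule Bochner_Integration.integrable_bound)
    show "(\<lambda>\<omega>. fst \<omega> i * snd \<omega> i) \<in> borel_measurable (mu \<Otimes>\<^sub>M G)" by measurable
    show "AE \<omega> in mu \<Otimes>\<^sub>M G. norm (fst \<omega> i * snd \<omega> i) \<le> norm (R * \<bar>snd \<omega> i\<bar>)"
      using AE_fst[OF abs_coord]
    proof eventually_elim
      case (elim \<omega>)
      then have "\<bar>fst \<omega> i\<bar> \<le> R" using i by auto
      then show ?case using R_nonneg by (simp add: abs_mult mult_right_mono)
    qed
  qed
qed

lemma int_cross: "i < n \<Longrightarrow> (\<integral>\<omega>. fst \<omega> i * snd \<omega> i \<partial>(mu \<Otimes>\<^sub>M G)) = 0"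
proof -
  assume i: "i < n"
  have z: "(\<integral>z. z i \<partial>G) = 0"
  proof -
    have "(\<integral>z. z i \<partial>G) = (\<integral>t. t \<partial>NN s)"
      by (rule G_coord(2)[where h="\<lambda>t. t", OF s_pos i]) simp
    then show ?thesis using NN_moment1(2)[OF s_pos] by simp
  qed
  have inner: "(\<integral>z. x i * z i \<partial>G) = 0" for x :: "nat \<Rightarrow> real"
    using z by (simp only: integral_mult_right_zero mult_zero_right)
  have "(\<integral>\<omega>. fst \<omega> i * snd \<omega> i \<partial>(mu \<Otimes>\<^sub>M G)) = (\<integral>x. (\<integral>z. x i * z i \<partial>G) \<partial>mu)"
    using MG.integral_fst'[OF int_a2[OF i]] by (simp only: split_beta' fst_conv snd_conv)
  also have "\<dots> = 0" by (simp only: inner integral_zero)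
  finally show ?thesis .
qed

end

context chan
begin

definition Dent :: real where "Dent = (\<integral>y. pd y * ln (pd y) \<partial>G)"

lemma int_lnpdY: "integrable (mu \<Otimes>\<^sub>M G) (\<lambda>\<omega>. ln (pd (Yf \<omega>)))"
proof -
  have "integrable (mu \<Otimes>\<^sub>M G) (\<lambda>\<omega>. (3 * R\<^sup>2 + 2 * vn2 n (snd \<omega>)) / s\<^sup>2)"
    using int_snd(1)[of "vn2 n"] G_vn2(1)[OF s_pos] by auto
  then show ?thesis
  proof (rule Bochner_Integration.integrable_bound)
    show "(\<lambda>\<omega>. ln (pd (Yf \<omega>))) \<in> borel_measurable (mu \<Otimes>\<^sub>M G)" by measurable
    show "AE \<omega> in mu \<Otimes>\<^sub>M G. norm (ln (pd (Yf \<omega>))) \<le> norm ((3 * R\<^sup>2 + 2 * vn2 n (snd \<omega>)) / s\<^sup>2)"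
      using AE_fst[OF AE_vn2]
    proof eventually_elim
      case (elim \<omega>)
      have "\<bar>ln (pd (Yf \<omega>))\<bar> \<le> (R\<^sup>2 + vn2 n (Yf \<omega>)) / s\<^sup>2" by (rule ln_pd_bound)
      also have "\<dots> \<le> (3 * R\<^sup>2 + 2 * vn2 n (snd \<omega>)) / s\<^sup>2"
        using vn2_vadd[of n "fst \<omega>" "snd \<omega>"] elim s_pos unfolding Yf_def
        by (intro divide_right_mono) auto
      finally show ?case using vn2_nonneg[of n "snd \<omega>"] R_nonneg by simp
    qed
  qed
qed

lemma int_lnpd_P: "integrable P (\<lambda>y. ln (pd y))"
  unfolding P_def using int_lnpdY by (subst integrable_distr_eq) auto

lemma int_lnpd_eq: "(\<integral>\<omega>. ln (pd (Yf \<omega>)) \<partial>(mu \<Otimes>\<^sub>M G)) = Dent"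
proof -
  have "(\<integral>\<omega>. ln (pd (Yf \<omega>)) \<partial>(mu \<Otimes>\<^sub>M G)) = (\<integral>y. ln (pd y) \<partial>P)"
    unfolding P_def by (subst integral_distr) auto
  also have "\<dots> = Dent"
    unfolding P_dens Dent_def using pd_pos by (subst integral_density) (auto intro: less_imp_le)
  finally show ?thesis .
qed

lemma int_pdlnpd: "integrable G (\<lambda>y. pd y * ln (pd y))"
  using int_lnpd_P unfolding P_dens using pd_pos by (subst (asm) integrable_density) (auto intro: less_imp_le)

lemma MI_formula: "chan_MI n mu G = (\<integral>x. vn2 n x \<partial>mu) / (2 * s\<^sup>2) - Dent"
proof -
  define a where "a \<omega> = vn2 n (fst \<omega>) / (2 * s\<^sup>2) + (\<Sum>i<n. fst \<omega> i * snd \<omega> i) / s\<^sup>2" for \<omega> :: "(nat \<Rightarrow> real) \<times> (nat \<Rightarrow> real)"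
  have ia1: "integrable (mu \<Otimes>\<^sub>M G) (\<lambda>\<omega>. vn2 n (fst \<omega>))"
    using int_fst(1)[of "vn2 n"] mu_vn2 by simp
  have ia2: "integrable (mu \<Otimes>\<^sub>M G) (\<lambda>\<omega>. \<Sum>i<n. fst \<omega> i * snd \<omega> i)"
    by (intro Bochner_Integration.integrable_sum int_a2) simp
  have ia: "integrable (mu \<Otimes>\<^sub>M G) a"
    unfolding a_def using ia1 ia2 by auto
  have Ia: "(\<integral>\<omega>. a \<omega> \<partial>(mu \<Otimes>\<^sub>M G)) = (\<integral>x. vn2 n x \<partial>mu) / (2 * s\<^sup>2)"
  proof -
    have "(\<integral>\<omega>. a \<omega> \<partial>(mu \<Otimes>\<^sub>M G)) = (\<integral>\<omega>. vn2 n (fst \<omega>) \<partial>(mu \<Otimes>\<^sub>M G)) / (2 * s\<^sup>2) + (\<integral>\<omega>. (\<Sum>i<n. fst \<omega> i * snd \<omega> i) \<partial>(mu \<Otimes>\<^sub>M G)) / s\<^sup>2"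
      unfolding a_def using ia1 ia2 by simp
    also have "(\<integral>\<omega>. (\<Sum>i<n. fst \<omega> i * snd \<omega> i) \<partial>(mu \<Otimes>\<^sub>M G)) = (\<Sum>i<n. (\<integral>\<omega>. fst \<omega> i * snd \<omega> i \<partial>(mu \<Otimes>\<^sub>M G)))"
      by (intro Bochner_Integration.integral_sum int_a2) simp
    also have "\<dots> = 0" by (simp add: int_cross)
    also have "(\<integral>\<omega>. vn2 n (fst \<omega>) \<partial>(mu \<Otimes>\<^sub>M G)) = (\<integral>x. vn2 n x \<partial>mu)"
      by (rule int_fst(2)) simp
    finally show ?thesis by simp
  qed
  have pt: "ln (rn (fst \<omega>, Yf \<omega>)) = a \<omega> - ln (pd (Yf \<omega>))" for \<omega>
  proof -
    have "ln (rn (fst \<omega>, Yf \<omega>)) = ln (fd n s (fst \<omega>) (Yf \<omega>)) - ln (pd (Yf \<omega>))"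
      unfolding rn_def fst_conv snd_conv ln_div using fd_pos[of n s "fst \<omega>" "Yf \<omega>"] pd_pos[of "Yf \<omega>"] by simp
    moreover have "ln (fd n s (fst \<omega>) (Yf \<omega>)) = a \<omega>"
    proof -
      have "ln (fd n s (fst \<omega>) (Yf \<omega>)) = (\<Sum>i<n. (fst \<omega> i)\<^sup>2 / (2 * s\<^sup>2) + fst \<omega> i * snd \<omega> i / s\<^sup>2)"
        unfolding ln_fd Yf_def vadd_def
        using s_pos by (intro sum.cong refl) (simp add: power2_eq_square field_simps)
      also have "\<dots> = a \<omega>"
        unfolding a_def vn2_def by (simp add: sum.distrib sum_divide_distrib)
      finally show ?thesis .
    qed
    ultimately show ?thesis by simp
  qed
  have "chan_MI n mu G = (\<integral>\<omega>. ln (rn (fst \<omega>, Yf \<omega>)) \<partial>(mu \<Otimes>\<^sub>M G))"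
    unfolding KL_eq J_def by (subst integral_distr) auto
  also have "\<dots> = (\<integral>\<omega>. a \<omega> - ln (pd (Yf \<omega>)) \<partial>(mu \<Otimes>\<^sub>M G))"
    by (simp add: pt)
  also have "\<dots> = (\<integral>\<omega>. a \<omega> \<partial>(mu \<Otimes>\<^sub>M G)) - (\<integral>\<omega>. ln (pd (Yf \<omega>)) \<partial>(mu \<Otimes>\<^sub>M G))"
    using ia int_lnpdY by (rule Bochner_Integration.integral_diff)
  finally show ?thesis using Ia int_lnpd_eq by simp
qed

end

context chan
begin

lemma pd_int: "integrable G pd" "(\<integral>y. pd y \<partial>G) = 1"
proof -
  interpret PP: prob_space P by (rule prob_P)
  have i: "integrable P (\<lambda>_. 1::real)" by simp
  then show "integrable G pd"
    unfolding P_dens using pd_pos by (subst (asm) integrable_density) (auto intro: less_imp_le)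
  have "(\<integral>y. 1 \<partial>P) = (1::real)" using PP.prob_space by simp
  then show "(\<integral>y. pd y \<partial>G) = 1"
    unfolding P_dens using pd_pos by (subst (asm) integral_density) (auto intro: less_imp_le)
qed

lemma plogp_ge: "0 < p \<Longrightarrow> p - 1 \<le> p * ln (p::real)"
proof -
  assume p: "0 < p"
  have "ln (1 / p) \<le> 1 / p - 1" using p by (intro ln_le_minus_one) auto
  then have "- ln p \<le> 1 / p - 1" using p by (simp add: ln_div)
  then have "p * (- ln p) \<le> p * (1 / p - 1)" using p by (intro mult_left_mono) auto
  then show ?thesis using p by (simp add: algebra_simps)
qed

lemma Dent_nonneg: "0 \<le> Dent"
proof -
  have "(\<integral>y. pd y - 1 \<partial>G) \<le> Dent"
    unfolding Dent_def using pd_int(1) int_pdlnpd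
    by (intro integral_mono) (auto intro: plogp_ge pd_pos)
  moreover have "(\<integral>y. pd y - 1 \<partial>G) = 0"
    using pd_int GG.prob_space[unfolded space_gauss_vec] by (subst Bochner_Integration.integral_diff) auto
  ultimately show ?thesis by simp
qed

lemma P_nn:
  assumes g[measurable]: "g \<in> borel_measurable (Rn n)"
  shows "(\<integral>\<^sup>+y. g y \<partial>P) = (\<integral>\<^sup>+x. \<integral>\<^sup>+z. g (vadd n x z) \<partial>G \<partial>mu)"
proof -
  have "(\<integral>\<^sup>+y. g y \<partial>P) = (\<integral>\<^sup>+\<omega>. g (Yf \<omega>) \<partial>(mu \<Otimes>\<^sub>M G))"
    unfolding P_def by (subst nn_integral_distr) auto
  also have "\<dots> = (\<integral>\<^sup>+x. \<integral>\<^sup>+z. g (vadd n x z) \<partial>G \<partial>mu)"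
    by (subst GG.nn_integral_fst[symmetric]) (auto simp: Yf_def split_beta')
  finally show ?thesis .
qed

end

lemma nd_measurable[measurable (raw)]:
  assumes [measurable]: "f \<in> borel_measurable M" "g \<in> borel_measurable M"
  shows "(\<lambda>x. normal_density (f x) t (g x)) \<in> borel_measurable M"
  unfolding normal_density_def by measurable

lemma conv1:
  assumes s: "0 < s" and t: "0 < t" and A: "A \<in> sets borel"
  shows "(\<integral>\<^sup>+u. emeasure (density lborel (normal_density u t)) A \<partial>NN s) = emeasure (NN (sqrt (s\<^sup>2 + t\<^sup>2))) A"
proof -
  have "(\<integral>\<^sup>+u. emeasure (density lborel (normal_density u t)) A \<partial>NN s) =
        (\<integral>\<^sup>+u. ennreal (normal_density 0 s u) * (\<integral>\<^sup>+y. ennreal (normal_density u t y) * indicator A y \<partial>lborel) \<partial>lborel)"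
    unfolding NN_def using A by (subst nn_integral_density) (auto simp: emeasure_density)
  also have "\<dots> = (\<integral>\<^sup>+u. (\<integral>\<^sup>+y. ennreal (normal_density 0 t (y - u) * normal_density 0 s u) * indicator A y \<partial>lborel) \<partial>lborel)"
  proof (intro nn_integral_cong)
    fix u :: real
    have nd: "normal_density u t y = normal_density 0 t (y - u)" for y by (simp add: normal_density_def)
    show "ennreal (normal_density 0 s u) * (\<integral>\<^sup>+y. ennreal (normal_density u t y) * indicator A y \<partial>lborel) =
      (\<integral>\<^sup>+y. ennreal (normal_density 0 t (y - u) * normal_density 0 s u) * indicator A y \<partial>lborel)"
      using A by (subst nn_integral_cmult[symmetric]) (auto intro!: nn_integral_cong simp: ennreal_mult nd mult_ac)
  qed
  also have "\<dots> = (\<integral>\<^sup>+y. (\<integral>\<^sup>+u. ennreal (normal_density 0 t (y - u) * normal_density 0 s u) * indicator A y \<partial>lborel) \<partial>lborel)"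
    using A by (subst lborel_pair.Fubini') auto
  also have "\<dots> = (\<integral>\<^sup>+y. ennreal (normal_density 0 (sqrt (t\<^sup>2 + s\<^sup>2)) y) * indicator A y \<partial>lborel)"
  proof (intro nn_integral_cong)
    fix x :: real
    have c: "(\<integral>\<^sup>+u. ennreal (normal_density 0 t (x - u) * normal_density 0 s u) \<partial>lborel) = ennreal (normal_density 0 (sqrt (t\<^sup>2 + s\<^sup>2)) x)"
      using fun_cong[OF conv_normal_density_zero_mean[OF t s], of x] by simp
    show "(\<integral>\<^sup>+u. ennreal (normal_density 0 t (x - u) * normal_density 0 s u) * indicator A x \<partial>lborel) = ennreal (normal_density 0 (sqrt (t\<^sup>2 + s\<^sup>2)) x) * indicator A x"
      using A by (simp add: nn_integral_multc c)
  qed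
  also have "\<dots> = emeasure (NN (sqrt (s\<^sup>2 + t\<^sup>2))) A"
    unfolding NN_def using A by (simp add: emeasure_density add.commute)
  finally show ?thesis .
qed


lemma emeasure_shift_box:
  fixes n :: nat
  assumes t: "0 < t" and A': "\<And>i. i < n \<Longrightarrow> A i \<in> sets borel"
  shows "emeasure (PiM {..<n} (\<lambda>_. NN t)) (PiE {..<n} (\<lambda>i. {w. v i + w \<in> A i})) = (\<Prod>i<n. emeasure (NN t) {w. v i + w \<in> A i})"
proof -
  interpret T: product_prob_space "\<lambda>_. NN t"
    by (intro product_prob_spaceI prob_NN t)
  show ?thesis
  proof (rule T.emeasure_PiM)
    fix i assume "i \<in> {..<n}"
    then have Ai: "A i \<in> sets borel" using A' by simp
    have m: "(\<lambda>w. v i + w) \<in> borel_measurable borel" by simp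
    show "{w. v i + w \<in> A i} \<in> sets (NN t)" using measurable_sets[OF m Ai] by (simp add: vimage_def)
  qed simp
qed

lemma NN_prod_nn:
  fixes n :: nat
  assumes s: "0 < s" and f: "\<And>i. i < n \<Longrightarrow> f i \<in> borel_measurable borel"
  shows "(\<integral>\<^sup>+x. (\<Prod>i<n. f i (x i)) \<partial>PiM {..<n} (\<lambda>_. NN s)) = (\<Prod>i<n. \<integral>\<^sup>+u. f i u \<partial>NN s)"
proof -
  interpret S: product_prob_space "\<lambda>_. NN s"
    by (intro product_prob_spaceI prob_NN s)
  show ?thesis using f by (subst S.product_nn_integral_prod) auto
qed

lemma G_conv:
  assumes s: "0 < s" and t: "0 < t"
  shows "distr (gauss_vec n s \<Otimes>\<^sub>M gauss_vec n t) (Rn n) (\<lambda>\<omega>. vadd n (fst \<omega>) (snd \<omega>)) = gauss_vec n (sqrt (s\<^sup>2 + t\<^sup>2))"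
proof -
  let ?c = "sqrt (s\<^sup>2 + t\<^sup>2)"
  have c: "0 < ?c" using s by (simp add: add_pos_nonneg)
  interpret C: product_prob_space "\<lambda>_. NN ?c"
    by (intro product_prob_spaceI prob_NN c)
  interpret S: product_prob_space "\<lambda>_. NN s"
    by (intro product_prob_spaceI prob_NN s)
  interpret T: product_prob_space "\<lambda>_. NN t"
    by (intro product_prob_spaceI prob_NN t)
  interpret GT: prob_space "gauss_vec n t" by (rule prob_gauss_vec[OF t])
  interpret GS: prob_space "gauss_vec n s" by (rule prob_gauss_vec[OF s])
  let ?V = "\<lambda>\<omega>. vadd n (fst \<omega>) (snd \<omega>)"
  show ?thesis
    unfolding gauss_vec_NN[of n ?c]
  proof (rule C.PiM_eqI)
    show "sets (distr (gauss_vec n s \<Otimes>\<^sub>M gauss_vec n t) (Rn n) ?V) = sets (PiM {..<n} (\<lambda>_. NN ?c))"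
      by (simp add: Rn_def, intro sets_PiM_cong) auto
  next
    fix A assume A: "\<And>i. i \<in> {..<n} \<Longrightarrow> A i \<in> sets (NN ?c)"
    then have A': "\<And>i. i \<in> {..<n} \<Longrightarrow> A i \<in> sets borel" by simp
    let ?k = "\<lambda>i u. (\<integral>\<^sup>+y. ennreal (normal_density u t y) * indicator (A i) y \<partial>lborel)"
    have PA: "PiE {..<n} A \<in> sets (Rn n)"
      unfolding Rn_def using A' by (intro sets_PiM_I_finite) auto
    have pre: "Pair v -` (?V -` PiE {..<n} A \<inter> space (gauss_vec n s \<Otimes>\<^sub>M gauss_vec n t)) = PiE {..<n} (\<lambda>i. {w. v i + w \<in> A i})"
      if v: "v \<in> space (Rn n)" for v
      using v unfolding vadd_def space_pair_measure space_gauss_vec space_Rn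
      by (intro set_eqI) (simp add: PiE_iff)
    have meas: "?V -` PiE {..<n} A \<inter> space (gauss_vec n s \<Otimes>\<^sub>M gauss_vec n t) \<in> sets (gauss_vec n s \<Otimes>\<^sub>M gauss_vec n t)"
      using PA by measurable
    have "emeasure (distr (gauss_vec n s \<Otimes>\<^sub>M gauss_vec n t) (Rn n) ?V) (PiE {..<n} A)
        = emeasure (gauss_vec n s \<Otimes>\<^sub>M gauss_vec n t) (?V -` PiE {..<n} A \<inter> space (gauss_vec n s \<Otimes>\<^sub>M gauss_vec n t))"
      using PA by (subst emeasure_distr) auto
    also have "\<dots> = (\<integral>\<^sup>+v. emeasure (gauss_vec n t) (Pair v -` (?V -` PiE {..<n} A \<inter> space (gauss_vec n s \<Otimes>\<^sub>M gauss_vec n t))) \<partial>gauss_vec n s)"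
      by (rule GT.emeasure_pair_measure_alt[OF meas])
    also have "\<dots> = (\<integral>\<^sup>+v. emeasure (gauss_vec n t) (PiE {..<n} (\<lambda>i. {w. v i + w \<in> A i})) \<partial>gauss_vec n s)"
    proof (intro nn_integral_cong)
      fix v assume "v \<in> space (gauss_vec n s)"
      then have "v \<in> space (Rn n)" by simp
      then show "emeasure (gauss_vec n t) (Pair v -` (?V -` PiE {..<n} A \<inter> space (gauss_vec n s \<Otimes>\<^sub>M gauss_vec n t))) =
          emeasure (gauss_vec n t) (PiE {..<n} (\<lambda>i. {w. v i + w \<in> A i}))"
        by (simp only: pre)
    qed
    also have "\<dots> = (\<integral>\<^sup>+v. (\<Prod>i<n. ?k i (v i)) \<partial>PiM {..<n} (\<lambda>_. NN s))"
      unfolding gauss_vec_NN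
    proof (intro nn_integral_cong)
      fix v :: "nat \<Rightarrow> real"
      have "emeasure (PiM {..<n} (\<lambda>_. NN t)) (PiE {..<n} (\<lambda>i. {w. v i + w \<in> A i})) = (\<Prod>i<n. emeasure (NN t) {w. v i + w \<in> A i})"
        using A' by (intro emeasure_shift_box t) auto
      also have "\<dots> = (\<Prod>i<n. ?k i (v i))"
        using A' by (intro prod.cong refl) (simp add: NN_shift_set t emeasure_density)
      finally show "emeasure (PiM {..<n} (\<lambda>_. NN t)) (PiE {..<n} (\<lambda>i. {w. v i + w \<in> A i})) = (\<Prod>i<n. ?k i (v i))" .
    qed
    also have "\<dots> = (\<Prod>i<n. \<integral>\<^sup>+u. ?k i u \<partial>NN s)"
      using A' by (intro NN_prod_nn s) auto
    also have "\<dots> = (\<Prod>i<n. emeasure (NN ?c) (A i))"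
      using A' conv1[OF s t] by (intro prod.cong refl) (simp add: emeasure_density)
    finally show "emeasure (distr (gauss_vec n s \<Otimes>\<^sub>M gauss_vec n t) (Rn n) ?V) (PiE {..<n} A) = (\<Prod>i\<in>{..<n}. emeasure (NN ?c) (A i))"
      by simp
  qed simp
qed


lemma (in chan) lnpd_P_eq: "(\<integral>y. ln (pd y) \<partial>P) = Dent"
  unfolding P_dens Dent_def using pd_pos by (subst integral_density) (auto intro: less_imp_le)

lemma vadd_assoc: "vadd n (vadd n x z) w = vadd n x (vadd n z w)"
  by (auto simp: vadd_def fun_eq_iff)

lemma gibbs_pt: "0 < a \<Longrightarrow> 0 < b \<Longrightarrow> 0 \<le> a * ln a - a * ln b - a + (b::real)"
proof -
  assume a: "0 < a" and b: "0 < b"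
  have "ln (b / a) \<le> b / a - 1" using a b by (intro ln_le_minus_one) auto
  then have "ln b - ln a \<le> b / a - 1" using a b by (simp add: ln_div)
  then have "a * (ln b - ln a) \<le> a * (b / a - 1)" using a by (intro mult_left_mono) auto
  then show ?thesis using a by (simp add: algebra_simps)
qed

locale chan2 = c1: chan n s1 R mu + c2: chan n s2 R mu for n s1 s2 R mu +
  assumes s12: "s1 < s2"
begin

definition t :: real where "t = sqrt (s2\<^sup>2 - s1\<^sup>2)"

lemma t_pos: "0 < t"
  unfolding t_def using s12 c1.s_pos by (simp add: power_strict_mono)

lemma t_s2: "sqrt (s1\<^sup>2 + t\<^sup>2) = s2"
  unfolding t_def using s12 c1.s_pos c2.s_pos by (simp add: power_strict_mono less_imp_le)

abbreviation "G1 \<equiv> gauss_vec n s1"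
abbreviation "G2 \<equiv> gauss_vec n s2"
abbreviation "Gt \<equiv> gauss_vec n t"
abbreviation "V \<equiv> (\<lambda>\<omega>. vadd n (fst \<omega>) (snd \<omega>))"

sublocale GT: prob_space Gt by (rule prob_gauss_vec[OF t_pos])
sublocale OM: pair_prob_space G1 Gt ..

lemma conv_distr: "distr (G1 \<Otimes>\<^sub>M Gt) (Rn n) V = G2"
  using G_conv[OF c1.s_pos t_pos, of n] by (simp add: t_s2)

lemma conv_nn:
  assumes g[measurable]: "g \<in> borel_measurable (Rn n)"
  shows "(\<integral>\<^sup>+u. g u \<partial>G2) = (\<integral>\<^sup>+z. \<integral>\<^sup>+w. g (vadd n z w) \<partial>Gt \<partial>G1)"
proof -
  have "(\<integral>\<^sup>+u. g u \<partial>G2) = (\<integral>\<^sup>+\<omega>. g (V \<omega>) \<partial>(G1 \<Otimes>\<^sub>M Gt))"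
    unfolding conv_distr[symmetric] by (subst nn_integral_distr) auto
  also have "\<dots> = (\<integral>\<^sup>+z. \<integral>\<^sup>+w. g (vadd n z w) \<partial>Gt \<partial>G1)"
    by (subst GT.nn_integral_fst[symmetric]) (auto simp: split_beta')
  finally show ?thesis .
qed

lemma distr_fst1: "distr (G1 \<Otimes>\<^sub>M Gt) (Rn n) fst = G1"
proof -
  have "distr (G1 \<Otimes>\<^sub>M Gt) (Rn n) fst = distr (G1 \<Otimes>\<^sub>M Gt) G1 fst"
    by (intro distr_cong) auto
  then show ?thesis using GT.distr_pair_fst by simp
qed

lemma Phi: "distr (c1.P \<Otimes>\<^sub>M Gt) (Rn n) V = c2.P"
proof (rule measure_eqI)
  show "sets (distr (c1.P \<Otimes>\<^sub>M Gt) (Rn n) V) = sets c2.P" by simp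
next
  fix B assume "B \<in> sets (distr (c1.P \<Otimes>\<^sub>M Gt) (Rn n) V)"
  then have B[measurable]: "B \<in> sets (Rn n)" by simp
  have "emeasure (distr (c1.P \<Otimes>\<^sub>M Gt) (Rn n) V) B = (\<integral>\<^sup>+y. indicator B y \<partial>distr (c1.P \<Otimes>\<^sub>M Gt) (Rn n) V)"
    by simp
  also have "\<dots> = (\<integral>\<^sup>+\<omega>. indicator B (V \<omega>) \<partial>(c1.P \<Otimes>\<^sub>M Gt))"
    by (subst nn_integral_distr) auto
  also have "\<dots> = (\<integral>\<^sup>+v. \<integral>\<^sup>+w. indicator B (vadd n v w) \<partial>Gt \<partial>c1.P)"
    by (subst GT.nn_integral_fst[symmetric]) (auto simp: split_beta')
  also have "\<dots> = (\<integral>\<^sup>+x. \<integral>\<^sup>+z. \<integral>\<^sup>+w. indicator B (vadd n (vadd n x z) w) \<partial>Gt \<partial>G1 \<partial>mu)"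
    by (rule c1.P_nn) measurable
  also have "\<dots> = (\<integral>\<^sup>+x. \<integral>\<^sup>+u. indicator B (vadd n x u) \<partial>G2 \<partial>mu)"
    unfolding vadd_assoc by (intro nn_integral_cong conv_nn[symmetric]) measurable
  also have "\<dots> = (\<integral>\<^sup>+y. indicator B y \<partial>c2.P)"
    by (rule c2.P_nn[symmetric]) measurable
  also have "\<dots> = emeasure c2.P B" by simp
  finally show "emeasure (distr (c1.P \<Otimes>\<^sub>M Gt) (Rn n) V) B = emeasure c2.P B" .
qed

end

context chan2
begin

lemma Psi: "c1.P \<Otimes>\<^sub>M Gt = density (G1 \<Otimes>\<^sub>M Gt) (\<lambda>\<omega>. ennreal (c1.pd (fst \<omega>)))"
proof -
  interpret PP: prob_space c1.P by (rule c1.prob_P)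
  have "c1.P \<Otimes>\<^sub>M Gt = density G1 (\<lambda>y. ennreal (c1.pd y)) \<Otimes>\<^sub>M density Gt (\<lambda>_. 1)"
    by (simp add: density_1 c1.P_dens[symmetric])
  also have "\<dots> = density (G1 \<Otimes>\<^sub>M Gt) (\<lambda>(x, y). ennreal (c1.pd x) * 1)"
    by (rule pair_measure_density) (auto simp: density_1 intro: GT.sigma_finite_measure_axioms)
  finally show ?thesis by (simp add: split_beta')
qed

lemma int_fst1:
  fixes h :: "(nat \<Rightarrow> real) \<Rightarrow> real"
  assumes h[measurable]: "h \<in> borel_measurable (Rn n)"
  shows "integrable (G1 \<Otimes>\<^sub>M Gt) (\<lambda>\<omega>. h (fst \<omega>)) \<longleftrightarrow> integrable G1 h"
    and "(\<integral>\<omega>. h (fst \<omega>) \<partial>(G1 \<Otimes>\<^sub>M Gt)) = (\<integral>x. h x \<partial>G1)"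
  using integrable_distr_eq[of fst "G1 \<Otimes>\<^sub>M Gt" "Rn n" h] integral_distr[of fst "G1 \<Otimes>\<^sub>M Gt" "Rn n" h]
  unfolding distr_fst1 by auto

lemma int_V:
  fixes h :: "(nat \<Rightarrow> real) \<Rightarrow> real"
  assumes h[measurable]: "h \<in> borel_measurable (Rn n)"
  shows "integrable (G1 \<Otimes>\<^sub>M Gt) (\<lambda>\<omega>. h (V \<omega>)) \<longleftrightarrow> integrable G2 h"
    and "(\<integral>\<omega>. h (V \<omega>) \<partial>(G1 \<Otimes>\<^sub>M Gt)) = (\<integral>x. h x \<partial>G2)"
  using integrable_distr_eq[of V "G1 \<Otimes>\<^sub>M Gt" "Rn n" h] integral_distr[of V "G1 \<Otimes>\<^sub>M Gt" "Rn n" h]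
  unfolding conv_distr by auto

lemma cross:
  shows "integrable (G1 \<Otimes>\<^sub>M Gt) (\<lambda>\<omega>. c1.pd (fst \<omega>) * ln (c2.pd (V \<omega>)))"
    and "(\<integral>\<omega>. c1.pd (fst \<omega>) * ln (c2.pd (V \<omega>)) \<partial>(G1 \<Otimes>\<^sub>M Gt)) = c2.Dent"
proof -
  have nn: "AE \<omega> in G1 \<Otimes>\<^sub>M Gt. 0 \<le> c1.pd (fst \<omega>)" using c1.pd_pos by (auto intro: less_imp_le)
  have i: "integrable (c1.P \<Otimes>\<^sub>M Gt) (\<lambda>\<omega>. ln (c2.pd (V \<omega>)))"
    using integrable_distr_eq[of V "c1.P \<Otimes>\<^sub>M Gt" "Rn n" "\<lambda>y. ln (c2.pd y)"] c2.int_lnpd_P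
    unfolding Phi by auto
  then show "integrable (G1 \<Otimes>\<^sub>M Gt) (\<lambda>\<omega>. c1.pd (fst \<omega>) * ln (c2.pd (V \<omega>)))"
    unfolding Psi using nn by (subst (asm) integrable_density) auto
  have "(\<integral>\<omega>. ln (c2.pd (V \<omega>)) \<partial>(c1.P \<Otimes>\<^sub>M Gt)) = (\<integral>y. ln (c2.pd y) \<partial>c2.P)"
    unfolding Phi[symmetric] by (subst integral_distr) auto
  then show "(\<integral>\<omega>. c1.pd (fst \<omega>) * ln (c2.pd (V \<omega>)) \<partial>(G1 \<Otimes>\<^sub>M Gt)) = c2.Dent"
    unfolding Psi c2.lnpd_P_eq using nn by (subst (asm) integral_density) auto
qed

lemma DPI: "c2.Dent \<le> c1.Dent"
proof -
  let ?F = "\<lambda>\<omega>. c1.pd (fst \<omega>) * ln (c1.pd (fst \<omega>)) - c1.pd (fst \<omega>) * ln (c2.pd (V \<omega>)) - c1.pd (fst \<omega>) + c2.pd (V \<omega>)"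
  have i1: "integrable (G1 \<Otimes>\<^sub>M Gt) (\<lambda>\<omega>. c1.pd (fst \<omega>) * ln (c1.pd (fst \<omega>)))"
    using int_fst1(1)[of "\<lambda>y. c1.pd y * ln (c1.pd y)"] c1.int_pdlnpd by simp
  have i3: "integrable (G1 \<Otimes>\<^sub>M Gt) (\<lambda>\<omega>. c1.pd (fst \<omega>))"
    using int_fst1(1)[of c1.pd] c1.pd_int by simp
  have i4: "integrable (G1 \<Otimes>\<^sub>M Gt) (\<lambda>\<omega>. c2.pd (V \<omega>))"
    using int_V(1)[of c2.pd] c2.pd_int by simp
  have "0 \<le> (\<integral>\<omega>. ?F \<omega> \<partial>(G1 \<Otimes>\<^sub>M Gt))"
    by (intro integral_nonneg_AE AE_I2 gibbs_pt c1.pd_pos c2.pd_pos)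
  also have "(\<integral>\<omega>. ?F \<omega> \<partial>(G1 \<Otimes>\<^sub>M Gt)) =
     (\<integral>\<omega>. c1.pd (fst \<omega>) * ln (c1.pd (fst \<omega>)) \<partial>(G1 \<Otimes>\<^sub>M Gt)) - (\<integral>\<omega>. c1.pd (fst \<omega>) * ln (c2.pd (V \<omega>)) \<partial>(G1 \<Otimes>\<^sub>M Gt))
     - (\<integral>\<omega>. c1.pd (fst \<omega>) \<partial>(G1 \<Otimes>\<^sub>M Gt)) + (\<integral>\<omega>. c2.pd (V \<omega>) \<partial>(G1 \<Otimes>\<^sub>M Gt))"
    using i1 cross(1) i3 i4 by simp
  also have "\<dots> = c1.Dent - c2.Dent - 1 + 1"
    using int_fst1(2)[of "\<lambda>y. c1.pd y * ln (c1.pd y)"] int_fst1(2)[of c1.pd] int_V(2)[of c2.pd] c1.pd_int(2) c2.pd_int(2) cross(2)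
    by (simp add: c1.Dent_def)
  finally show ?thesis by simp
qed

end

lemma cosh_le_exp: "cosh (u::real) \<le> exp (u\<^sup>2 / 2)"
proof -
  define h where "h = 2 * \<bar>u\<bar>"
  have h0: "0 \<le> h" unfolding h_def by simp
  have H: "- h * (1/2) + ln (1 + (1/2) * (exp h - 1)) \<le> h\<^sup>2 / 8"
    using Hoeffdings_lemma_aux[OF h0, of "1/2"] by simp
  have c: "cosh u = cosh \<bar>u\<bar>" by (cases "u \<ge> 0") auto
  have e0: "1 + (1/2) * (exp (2 * v) - 1) = exp v * cosh v" for v :: real
  proof -
    have "exp (2 * v) = exp v * exp v" by (simp add: exp_add[symmetric])
    moreover have "exp v * exp (- v) = 1" by (simp add: exp_minus_inverse)
    ultimately show ?thesis unfolding cosh_def by (simp add: field_simps)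
  qed
  have e: "1 + (1/2) * (exp h - 1) = exp \<bar>u\<bar> * cosh u"
    unfolding h_def c by (rule e0)
  have cp: "0 < cosh u" by (simp add: cosh_real_pos)
  have lm: "ln (exp \<bar>u\<bar> * cosh u) = \<bar>u\<bar> + ln (cosh u)" using cp by (simp add: ln_mult)
  have "- h * (1/2) + ln (exp \<bar>u\<bar> * cosh u) \<le> h\<^sup>2 / 8"
    using H by (simp only: e)
  then have "- h * (1/2) + (\<bar>u\<bar> + ln (cosh u)) \<le> h\<^sup>2 / 8"
    by (simp only: lm)
  moreover have "h\<^sup>2 / 8 = u\<^sup>2 / 2" unfolding h_def by (simp add: power2_eq_square)
  moreover have "- h * (1/2) = - \<bar>u\<bar>" unfolding h_def by simp
  ultimately have "ln (cosh u) \<le> u\<^sup>2 / 2" by linarith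
  then show ?thesis using cp by (metis exp_ln exp_le_cancel_iff)
qed

definition Bm :: "real \<Rightarrow> real measure" where
  "Bm a = distr (measure_pmf (bernoulli_pmf (1/2))) borel (\<lambda>b. if b then a else - a)"

definition cube :: "nat \<Rightarrow> real \<Rightarrow> (nat \<Rightarrow> real) measure" where
  "cube n a = PiM {..<n} (\<lambda>_. Bm a)"

lemma sets_Bm[simp, measurable_cong]: "sets (Bm a) = sets borel"
  by (simp add: Bm_def)

lemma prob_Bm: "prob_space (Bm a)"
  unfolding Bm_def by (rule prob_space.prob_space_distr) (auto simp: measure_pmf.prob_space_axioms)

lemma Bm_nn: "(\<integral>\<^sup>+u. ennreal (g u) \<partial>Bm a) = ennreal ((g a + g (-a)) / 2)" if "\<And>u. 0 \<le> g u" "g \<in> borel_measurable borel"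
proof -
  have "(\<integral>\<^sup>+u. ennreal (g u) \<partial>Bm a) = (\<integral>\<^sup>+b. ennreal (g (if b then a else -a)) \<partial>measure_pmf (bernoulli_pmf (1/2)))"
    unfolding Bm_def using that by (subst nn_integral_distr) auto
  also have "\<dots> = ennreal ((g a + g (-a)) / 2)"
  proof (subst nn_integral_bernoulli_pmf)
    have "ennreal ((g a + g (-a)) / 2) = ennreal (g a * (1/2) + g (-a) * (1 - 1/2))" by (simp add: add_divide_distrib)
    also have "\<dots> = ennreal (g a * (1/2)) + ennreal (g (-a) * (1 - 1/2))"
      using that by (intro ennreal_plus) auto
    also have "\<dots> = ennreal (g a) * ennreal (1/2) + ennreal (g (-a)) * ennreal (1 - 1/2)"
      using that by (simp only: ennreal_mult)
    finally show "ennreal (g (if True then a else - a)) * ennreal (1 / 2) + ennreal (g (if False then a else - a)) * ennreal (1 - 1 / 2) = ennreal ((g a + g (- a)) / 2)"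
      by simp
  qed auto
  finally show ?thesis .
qed

lemma AE_Bm: "AE u in Bm a. u = a \<or> u = - a"
proof -
  have "AE b in measure_pmf (bernoulli_pmf (1/2)). (if b then a else - a) = a \<or> (if b then a else - a) = - a"
    by simp
  then show ?thesis unfolding Bm_def
    by (subst AE_distr_iff) auto
qed

lemma sets_cube[simp, measurable_cong]: "sets (cube n a) = sets (Rn n)"
  unfolding cube_def Rn_def by (intro sets_PiM_cong) auto

lemma prob_cube: "prob_space (cube n a)"
  unfolding cube_def by (intro prob_space_PiM prob_Bm)

lemma AE_cube: "AE x in cube n a. \<forall>i<n. x i = a \<or> x i = - a"
proof -
  have "\<forall>i\<in>{..<n}. AE x in cube n a. x i = a \<or> x i = - a"
    unfolding cube_def by (intro ballI AE_PiM_component prob_Bm AE_Bm)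
  then have "AE x in cube n a. \<forall>i\<in>{..<n}. x i = a \<or> x i = - a"
    by (subst AE_finite_all) auto
  then show ?thesis by (rule eventually_mono) auto
qed


context chan
begin

lemma P_vn2: "integrable P (vn2 n)" "(\<integral>y. vn2 n y \<partial>P) = (\<integral>x. vn2 n x \<partial>mu) + n * s\<^sup>2"
proof -
  have pt: "vn2 n (Yf \<omega>) = vn2 n (fst \<omega>) + 2 * (\<Sum>i<n. fst \<omega> i * snd \<omega> i) + vn2 n (snd \<omega>)" for \<omega>
    unfolding vn2_def Yf_def vadd_def
    by (simp add: power2_eq_square algebra_simps sum.distrib sum_distrib_left)
  have ia1: "integrable (mu \<Otimes>\<^sub>M G) (\<lambda>\<omega>. vn2 n (fst \<omega>))"
    using int_fst(1)[of "vn2 n"] mu_vn2 by simp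
  have ia2: "integrable (mu \<Otimes>\<^sub>M G) (\<lambda>\<omega>. \<Sum>i<n. fst \<omega> i * snd \<omega> i)"
    by (intro Bochner_Integration.integrable_sum int_a2) simp
  have ia3: "integrable (mu \<Otimes>\<^sub>M G) (\<lambda>\<omega>. vn2 n (snd \<omega>))"
    using int_snd(1)[of "vn2 n"] G_vn2(1)[OF s_pos] by simp
  have c0: "(\<integral>\<omega>. (\<Sum>i<n. fst \<omega> i * snd \<omega> i) \<partial>(mu \<Otimes>\<^sub>M G)) = 0"
    by (subst Bochner_Integration.integral_sum) (auto intro: int_a2 simp: int_cross)
  have iY: "integrable (mu \<Otimes>\<^sub>M G) (\<lambda>\<omega>. vn2 n (Yf \<omega>))"
    unfolding pt using ia1 ia2 ia3 by auto
  then show "integrable P (vn2 n)"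
    unfolding P_def by (subst integrable_distr_eq) auto
  have "(\<integral>y. vn2 n y \<partial>P) = (\<integral>\<omega>. vn2 n (Yf \<omega>) \<partial>(mu \<Otimes>\<^sub>M G))"
    unfolding P_def by (subst integral_distr) auto
  also have "\<dots> = (\<integral>\<omega>. vn2 n (fst \<omega>) \<partial>(mu \<Otimes>\<^sub>M G)) + 2 * (\<integral>\<omega>. (\<Sum>i<n. fst \<omega> i * snd \<omega> i) \<partial>(mu \<Otimes>\<^sub>M G)) + (\<integral>\<omega>. vn2 n (snd \<omega>) \<partial>(mu \<Otimes>\<^sub>M G))"
    unfolding pt using ia1 ia2 ia3 by simp
  also have "\<dots> = (\<integral>x. vn2 n x \<partial>mu) + n * s\<^sup>2"
    using int_fst(2)[of "vn2 n"] int_snd(2)[of "vn2 n"] G_vn2(2)[OF s_pos] c0 by simp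
  finally show "(\<integral>y. vn2 n y \<partial>P) = (\<integral>x. vn2 n x \<partial>mu) + n * s\<^sup>2" .
qed

lemma A_le: "(\<integral>x. vn2 n x \<partial>mu) \<le> R\<^sup>2"
proof -
  have "(\<integral>x. vn2 n x \<partial>mu) \<le> (\<integral>x. R\<^sup>2 \<partial>mu)"
    using mu_vn2 AE_vn2 by (intro integral_mono_AE) auto
  then show ?thesis using M.prob_space by simp
qed

lemma A_nonneg: "0 \<le> (\<integral>x. vn2 n x \<partial>mu)"
  by (rule integral_nonneg_AE) (simp add: vn2_nonneg)

end

lemma cube_vn2:
  assumes n: "0 < n" and R: "0 \<le> R"
  shows "AE x in cube n (R / sqrt n). vn2 n x = R\<^sup>2"
  using AE_cube
proof eventually_elim
  case (elim x)
  have "vn2 n x = (\<Sum>i<n. (R / sqrt n)\<^sup>2)"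
    unfolding vn2_def using elim by (intro sum.cong refl) (auto simp: power2_eq_square)
  also have "\<dots> = R\<^sup>2" using n by (simp add: power_divide)
  finally show ?case .
qed

lemma cube_chan:
  assumes n: "0 < n" and R: "0 \<le> R" and s: "0 < s"
  shows "chan n s R (cube n (R / sqrt n))"
proof -
  have ae: "AE x in cube n (R / sqrt n). vnorm n x \<le> R"
    using cube_vn2[OF n R] by eventually_elim (use R in \<open>simp add: vnorm_def vn2_def[symmetric]\<close>)
  show ?thesis by (rule chan.intro[OF s prob_cube sets_cube ae])
qed


lemma Bm_prod_nn:
  fixes n :: nat
  assumes f: "\<And>i. i < n \<Longrightarrow> f i \<in> borel_measurable borel"
  shows "(\<integral>\<^sup>+x. (\<Prod>i<n. f i (x i)) \<partial>PiM {..<n} (\<lambda>_. Bm a)) = (\<Prod>i<n. \<integral>\<^sup>+u. f i u \<partial>Bm a)"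
proof -
  interpret S: product_prob_space "\<lambda>_. Bm a"
    by (intro product_prob_spaceI prob_Bm)
  show ?thesis using f by (subst S.product_nn_integral_prod) auto
qed

lemma ef_pair_le:
  assumes s: "0 < s"
  shows "(ef s a v + ef s (-a) v) / 2 \<le> exp (- a\<^sup>2 / (2 * s\<^sup>2) + a\<^sup>2 * v\<^sup>2 / (2 * s^4))"
proof -
  have "(ef s a v + ef s (-a) v) / 2 = exp (- a\<^sup>2 / (2 * s\<^sup>2)) * cosh (a * v / s\<^sup>2)"
    unfolding ef_def cosh_def by (simp add: exp_diff exp_minus field_simps)
  also have "\<dots> \<le> exp (- a\<^sup>2 / (2 * s\<^sup>2)) * exp ((a * v / s\<^sup>2)\<^sup>2 / 2)"
    by (intro mult_left_mono cosh_le_exp) auto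
  also have "\<dots> = exp (- a\<^sup>2 / (2 * s\<^sup>2) + a\<^sup>2 * v\<^sup>2 / (2 * s^4))"
    by (simp add: exp_add[symmetric] power_mult_distrib power_divide power2_eq_square[of s] power4_eq_xxxx)
  finally show ?thesis .
qed

locale cubechan = chan n s R "cube n (R / sqrt n)" for n s R +
  assumes n_pos: "0 < n"
begin

abbreviation "a \<equiv> R / sqrt n"

lemma cube_pe_le: "pe y \<le> ennreal (exp (a\<^sup>2 * vn2 n y / (2 * s^4) - R\<^sup>2 / (2 * s\<^sup>2)))"
proof -
  have "pe y = (\<integral>\<^sup>+x. (\<Prod>i<n. ennreal (ef s (x i) (y i))) \<partial>PiM {..<n} (\<lambda>_. Bm a))"
    unfolding pe_def by (simp add: cube_def fd_prod)
  also have "\<dots> = (\<Prod>i<n. \<integral>\<^sup>+u. ennreal (ef s u (y i)) \<partial>Bm a)"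
    by (intro Bm_prod_nn) (simp add: ef_def)
  also have "\<dots> = (\<Prod>i<n. ennreal ((ef s a (y i) + ef s (-a) (y i)) / 2))"
    by (intro prod.cong refl Bm_nn) (auto simp: ef_def)
  also have "\<dots> = ennreal (\<Prod>i<n. (ef s a (y i) + ef s (-a) (y i)) / 2)"
    by (rule prod_ennreal) (auto simp: ef_def intro: add_nonneg_nonneg)
  also have "\<dots> \<le> ennreal (\<Prod>i<n. exp (- a\<^sup>2 / (2 * s\<^sup>2) + a\<^sup>2 * (y i)\<^sup>2 / (2 * s^4)))"
    by (intro ennreal_leI prod_mono conjI ef_pair_le s_pos) (auto simp: ef_def intro: add_nonneg_nonneg)
  also have "(\<Prod>i<n. exp (- a\<^sup>2 / (2 * s\<^sup>2) + a\<^sup>2 * (y i)\<^sup>2 / (2 * s^4))) = exp (\<Sum>i<n. - a\<^sup>2 / (2 * s\<^sup>2) + a\<^sup>2 * (y i)\<^sup>2 / (2 * s^4))"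
    by (simp add: exp_sum)
  also have "(\<Sum>i<n. - a\<^sup>2 / (2 * s\<^sup>2) + a\<^sup>2 * (y i)\<^sup>2 / (2 * s^4)) = a\<^sup>2 * vn2 n y / (2 * s^4) - R\<^sup>2 / (2 * s\<^sup>2)"
  proof -
    have "(\<Sum>i<n. - a\<^sup>2 / (2 * s\<^sup>2) + a\<^sup>2 * (y i)\<^sup>2 / (2 * s^4)) = real n * (- a\<^sup>2 / (2 * s\<^sup>2)) + a\<^sup>2 * vn2 n y / (2 * s^4)"
      unfolding vn2_def by (simp add: sum.distrib sum_subtractf sum_distrib_left sum_divide_distrib)
    moreover have "real n * a\<^sup>2 = R\<^sup>2" using n_pos R_nonneg by (simp add: power_divide)
    moreover have "real n * (- a\<^sup>2 / (2 * s\<^sup>2)) = - (real n * a\<^sup>2) / (2 * s\<^sup>2)" by simp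
    ultimately show ?thesis by simp
  qed
  finally show ?thesis .
qed

lemma cube_ln_pd: "ln (pd y) \<le> a\<^sup>2 * vn2 n y / (2 * s^4) - R\<^sup>2 / (2 * s\<^sup>2)"
proof -
  have "pd y \<le> exp (a\<^sup>2 * vn2 n y / (2 * s^4) - R\<^sup>2 / (2 * s\<^sup>2))"
    using cube_pe_le[of y] unfolding pe_eq by (simp add: ennreal_le_iff2)
  then have "ln (pd y) \<le> ln (exp (a\<^sup>2 * vn2 n y / (2 * s^4) - R\<^sup>2 / (2 * s\<^sup>2)))"
    using pd_pos[of y] by (subst ln_le_cancel_iff) auto
  then show ?thesis by simp
qed

lemma cube_A: "(\<integral>x. vn2 n x \<partial>cube n a) = R\<^sup>2"
proof -
  have "(\<integral>x. vn2 n x \<partial>cube n a) = (\<integral>x. R\<^sup>2 \<partial>cube n a)"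
    using cube_vn2[OF n_pos R_nonneg] by (intro integral_cong_AE) auto
  then show ?thesis using M.prob_space by simp
qed

lemma cube_Dent: "Dent \<le> R^4 / (2 * n * s^4)"
proof -
  interpret PP: prob_space P by (rule prob_P)
  have "Dent = (\<integral>y. ln (pd y) \<partial>P)" by (simp add: lnpd_P_eq)
  also have "\<dots> \<le> (\<integral>y. a\<^sup>2 / (2 * s^4) * vn2 n y - R\<^sup>2 / (2 * s\<^sup>2) \<partial>P)"
    using int_lnpd_P P_vn2(1) cube_ln_pd by (intro integral_mono) auto
  also have "\<dots> = a\<^sup>2 / (2 * s^4) * (R\<^sup>2 + n * s\<^sup>2) - R\<^sup>2 / (2 * s\<^sup>2)"
    using P_vn2 cube_A PP.prob_space by simp
  also have "\<dots> = R^4 / (2 * n * s^4)"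
    using n_pos s_pos by (simp add: power_divide field_simps power2_eq_square power4_eq_xxxx)
  finally show ?thesis .
qed

end

lemma chan_of_input:
  assumes "mu \<in> input_dists n R" "0 < s"
  shows "chan n s R mu"
  using assms unfolding input_dists_def by (intro chan.intro) auto

lemma diff_upper:
  assumes mu: "mu \<in> input_dists n R" and s1: "0 < s1" and s12: "s1 < s2"
  shows "chan_MI n mu (gauss_vec n s1) - chan_MI n mu (gauss_vec n s2) \<le> R\<^sup>2 * (1 / (2 * s1\<^sup>2) - 1 / (2 * s2\<^sup>2))"
proof -
  interpret C: chan2 n s1 s2 R mu
    by (intro chan2.intro chan2_axioms.intro chan_of_input[OF mu] s12 s1) (use s1 s12 in linarith)
  define A where "A = (\<integral>x. vn2 n x \<partial>mu)"
  have c: "0 \<le> 1 / (2 * s1\<^sup>2) - 1 / (2 * s2\<^sup>2)"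
    using s1 s12 by (simp add: frac_le power_strict_mono less_imp_le)
  have "chan_MI n mu (gauss_vec n s1) - chan_MI n mu (gauss_vec n s2) = A * (1 / (2 * s1\<^sup>2) - 1 / (2 * s2\<^sup>2)) - C.c1.Dent + C.c2.Dent"
    unfolding C.c1.MI_formula C.c2.MI_formula A_def by (simp add: field_simps)
  also have "\<dots> \<le> A * (1 / (2 * s1\<^sup>2) - 1 / (2 * s2\<^sup>2))"
    using C.DPI by simp
  also have "\<dots> \<le> R\<^sup>2 * (1 / (2 * s1\<^sup>2) - 1 / (2 * s2\<^sup>2))"
    unfolding A_def using C.c1.A_le c by (intro mult_right_mono)
  finally show ?thesis .
qed

lemma diff_cube:
  assumes n: "0 < n" and R: "0 \<le> R" and s1: "0 < s1" and s12: "s1 < s2"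
  shows "cube n (R / sqrt n) \<in> input_dists n R"
    and "R\<^sup>2 * (1 / (2 * s1\<^sup>2) - 1 / (2 * s2\<^sup>2)) - R^4 / (2 * s1^4) / n \<le>
         chan_MI n (cube n (R / sqrt n)) (gauss_vec n s1) - chan_MI n (cube n (R / sqrt n)) (gauss_vec n s2)"
proof -
  have s2: "0 < s2" using s1 s12 by linarith
  interpret C1: cubechan n s1 R by (intro cubechan.intro cube_chan n R s1 cubechan_axioms.intro)
  interpret C2: chan n s2 R "cube n (R / sqrt n)" by (rule cube_chan[OF n R s2])
  show "cube n (R / sqrt n) \<in> input_dists n R"
    unfolding input_dists_def using C1.mu_prob C1.mu_bnd by auto
  have "chan_MI n (cube n (R / sqrt n)) (gauss_vec n s1) - chan_MI n (cube n (R / sqrt n)) (gauss_vec n s2)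
      = R\<^sup>2 * (1 / (2 * s1\<^sup>2) - 1 / (2 * s2\<^sup>2)) - C1.Dent + C2.Dent"
    unfolding C1.MI_formula C2.MI_formula C1.cube_A by (simp add: field_simps)
  also have "\<dots> \<ge> R\<^sup>2 * (1 / (2 * s1\<^sup>2) - 1 / (2 * s2\<^sup>2)) - R^4 / (2 * s1^4) / n"
    using C1.cube_Dent C2.Dent_nonneg by (simp add: field_simps)
  finally show "R\<^sup>2 * (1 / (2 * s1\<^sup>2) - 1 / (2 * s2\<^sup>2)) - R^4 / (2 * s1^4) / n \<le>
         chan_MI n (cube n (R / sqrt n)) (gauss_vec n s1) - chan_MI n (cube n (R / sqrt n)) (gauss_vec n s2)" .
qed

theorem theorem6:
  fixes R s1 s2 :: real
  assumes "0 \<le> R" and "0 < s1" and "s1 < s2"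
    and "assumption_A"
  shows "(\<lambda>n. Cs s1 s2 R n) \<longlonglongrightarrow> R\<^sup>2 * (1 / (2 * s1\<^sup>2) - 1 / (2 * s2\<^sup>2))"
proof -
  define L where "L = R\<^sup>2 * (1 / (2 * s1\<^sup>2) - 1 / (2 * s2\<^sup>2))"
  define K where "K = R^4 / (2 * s1^4)"
  let ?f = "\<lambda>n mu. chan_MI n mu (gauss_vec n s1) - chan_MI n mu (gauss_vec n s2)"
  have up: "Cs s1 s2 R n \<le> L" if n: "0 < n" for n
  proof -
    have ne: "input_dists n R \<noteq> {}" using diff_cube(1)[OF n assms(1-3)] by auto
    show ?thesis unfolding Cs_def L_def
      by (rule cSUP_least[OF ne]) (rule diff_upper[OF _ assms(2,3)])
  qed
  have low: "L - K / n \<le> Cs s1 s2 R n" if n: "0 < n" for n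
  proof -
    have bdd: "bdd_above (?f n ` input_dists n R)"
      unfolding L_def by (rule bdd_aboveI2) (rule diff_upper[OF _ assms(2,3)])
    have "L - K / n \<le> ?f n (cube n (R / sqrt n))"
      unfolding L_def K_def using diff_cube(2)[OF n assms(1-3)] by simp
    also have "\<dots> \<le> Cs s1 s2 R n"
      unfolding Cs_def by (rule cSUP_upper[OF diff_cube(1)[OF n assms(1-3)] bdd])
    finally show ?thesis .
  qed
  have lim: "(\<lambda>n. L - K / real n) \<longlonglongrightarrow> L"
    using tendsto_diff[OF tendsto_const lim_const_over_n[of K]] by simp
  show ?thesis
    unfolding L_def[symmetric]
  proof (rule tendsto_sandwich[OF _ _ lim tendsto_const])
    show "\<forall>\<^sub>F n in sequentially. L - K / real n \<le> Cs s1 s2 R n"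
      using eventually_gt_at_top[of 0] by eventually_elim (rule low)
    show "\<forall>\<^sub>F n in sequentially. Cs s1 s2 R n \<le> L"
      using eventually_gt_at_top[of 0] by eventually_elim (rule up)
  qed
qed


end
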